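(* Consider the quadratic Klein–Gordon equation $$\partial_t^2u-\partial_x^2u+mu=Q_{00}(u_t,u_t)+Q_{01}(u_t,u)+Q_{11}(u,u),$$ where $Q_{00},Q_{01},Q_{11}$ are translation-invariant bilinear forms with symbols $q_{00}\in\mathrm{span}\{1,\,i(\xi_1+\xi_2)\}$, $q_{01}\in\mathrm{span}\{1,i\xi_1,i\xi_2,\xi_1\xi_2,\xi_2^2\}$, $q_{11}\in\mathrm{span}\{1,\,i(\xi_1+\xi_2),\,\xi_1\xi_2,\,\xi_1^2+\xi_2^2,\,i(\xi_1^2\xi_2+\xi_1\xi_2^2)\}$, with $q_{00},q_{11}$ symmetric in $(\xi_1,\xi_2)$, all mapping real-valued functions to real-valued functions. Then there exists a unique normal form transformation $$\mathbf u=u+A(u,u)+B(u_t,u_t)+C(u_t,u),$$ with $A,B,C$ translation-invariant bilinear forms mapping real functions to real functions (with $A$, $B$ having symmetric symbols), such that $$-\Lambda_2\big(L_{KG}(A(u,u)+B(u_t,u_t)+C(u_t,u))\big)=Q_{00}(u_t,u_t)+Q_{01}(u_t,u)+Q_{11}(u,u).$$ Moreover, with $a,b,c$ the symbols of $A,B,C$: (i) In the low–high region $|\xi_1|\le c_0|\xi_2|$ (for a fixed small $c_0>0$) one has $a(\xi_1,\xi_2)=a_0(\xi_1)\xi_2+a_1(\xi_1)+O((1+|\xi_1|^4)\xi_2^{-1})$ with $a_0\in S^2$, $a_1\in S^3$; $b(\xi_1,\xi_2)=b_0(\xi_1)+b_1(\xi_1)\xi_2^{-1}+O((1+|\xi_1|^3)\xi_2^{-2})$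 with $b_0\in S^1$, $b_1\in S^2$; $c(\xi_1,\xi_2)=c^1_0(\xi_1)\xi_2+c^1_1(\xi_1)+O((1+|\xi_1|^3)\xi_2^{-1})$ with $c^1_0\in S^1$, $c^1_1\in S^2$; and in the high–low region $|\xi_2|\le c_0|\xi_1|$, $c(\xi_1,\xi_2)=c^2_0(\xi_2)+c^2_1(\xi_2)\xi_1^{-1}+O((1+|\xi_2|^4)\xi_1^{-2})$ with $c^2_0\in S^2$, $c^2_1\in S^3$. (ii) For the high–high parts $a_{hh}=\chi_{hh}a$, $b_{hh}=\chi_{hh}b$, $c_{hh}=\chi_{hh}c$ there are decompositions $a_{hh}=(\xi_1+\xi_2)\tilde a_{hh}+a^{(0)}_{hh}$, $b_{hh}=(\xi_1+\xi_2)\tilde b_{hh}+b^{(0)}_{hh}$, $c_{hh}=(\xi_1+\xi_2)\tilde c_{hh}+c^{(0)}_{hh}$ with $\tilde a_{hh},a^{(0)}_{hh}\in S^2$, $\tilde b_{hh},b^{(0)}_{hh}\in S^0$, $\tilde c_{hh},c^{(0)}_{hh}\in S^1$.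
   Context: $m>0$, $L_{KG}:=\partial_t^2-\partial_x^2+m$. A translation-invariant bilinear form $B$ with symbol $b(\eta,\xi)$ acts by $\widehat{B(f,g)}(\zeta)=\int_{\xi+\eta=\zeta}b(\eta,\xi)\hat f(\eta)\hat g(\xi)\,d\xi$ (so $\xi_1$ is the frequency of the first argument, $\xi_2$ of the second). It maps real functions to real functions iff $b(-\xi_1,-\xi_2)=\overline{b(\xi_1,\xi_2)}$. $\Lambda_2$ keeps only the terms that are exactly quadratic in $u$ after all second time derivatives $u_{tt}$ (and those of $u_t$) are eliminated using the equation; equivalently, the identity holds for all solutions of the linear equation $L_{KG}u=0$. One-variable class $S^n$: $|\partial^k_\xi a(\xi)|\lesssim_k\langle\xi\rangle^{n-k}$. Bilinear class $S^n$: $|\partial^{\alpha_1}_{\xi_1}\partial^{\alpha_2}_{\xi_2}m(\xi_1,\xi_2)|\lesssim_\alpha\langle\xi\rangle^{n-|\alpha|}$, $\xi=(\xi_1,\xi_2)$. $\chi_{hh}(\xi_1,\xi_2)$ is a smooth nonnegative cutoff (smooth on the dyadic scale) equal to $1$ when $\frac1{10}\le\langle\xi_1\rangle/\langle\xi_2\rangle\le10$ and $0$ when $\langle\xi_1\rangle\le\frac1{20}\langle\xi_2\rangle$ or $\langle\xi_2\rangle\le\frac1{20}\langle\xi_1\rangle$. *)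

theory Defs
  imports "HOL-Analysis.Analysis"
begin

text \<open>A translation-invariant bilinear form is identified with its symbol
  b(xi1,xi2): xi1 is the frequency of the first argument, xi2 of the second.\<close>
type_synonym symb = "real \<Rightarrow> real \<Rightarrow> complex"

text \<open>A quadratic expression in u and its time derivatives:
  E j k is the symbol of the term S(d_t^j u, d_t^k u); the expression is
  the (finite) sum over all j, k of these terms.\<close>
type_synonym qexpr = "nat \<Rightarrow> nat \<Rightarrow> symb"

definition qe_zero :: qexpr where "qe_zero = (\<lambda>j k x y. 0)"

definition qe_neg :: "qexpr \<Rightarrow> qexpr" where
  "qe_neg E = (\<lambda>j k x y. - E j k x y)"

text \<open>Time derivative (Leibniz rule):
  d_t S(d_t^j u, d_t^k u) = S(d_t^(j+1) u, d_t^k u) + S(d_t^j u, d_t^(k+1) u).\<close>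
definition qe_dt :: "qexpr \<Rightarrow> qexpr" where
  "qe_dt E = (\<lambda>j k x y. (if 0 < j then E (j - 1) k x y else 0)
                       + (if 0 < k then E j (k - 1) x y else 0))"

text \<open>L_KG = d_t^2 - d_x^2 + m; the output frequency is xi1 + xi2, so
  -d_x^2 + m acts by multiplication with (xi1+xi2)^2 + m.\<close>
definition qe_LKG :: "real \<Rightarrow> qexpr \<Rightarrow> qexpr" where
  "qe_LKG m E = (\<lambda>j k x y. qe_dt (qe_dt E) j k x y
                         + complex_of_real ((x + y)^2 + m) * E j k x y)"

text \<open>Lambda_2 with elimination of higher time derivatives via the linear
  equation u_tt = u_xx - m u, i.e. d_t^j u has Fourier multiplier
  (-(xi^2+m))^(j div 2) times d_t^(j mod 2) u.  N is a bound on the time-derivative orders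
  occurring in E (terms with j > N or k > N are assumed absent).\<close>
definition qe_Lambda2 :: "real \<Rightarrow> nat \<Rightarrow> qexpr \<Rightarrow> qexpr" where
  "qe_Lambda2 m N E = (\<lambda>r s x y.
     if r \<le> 1 \<and> s \<le> 1 then
       (\<Sum>j\<le>N. \<Sum>k\<le>N. if j mod 2 = r \<and> k mod 2 = s
          then E j k x y * complex_of_real ((- (x^2 + m)) ^ (j div 2))
                         * complex_of_real ((- (y^2 + m)) ^ (k div 2))
          else 0)
     else 0)"

text \<open>Equality of two reduced quadratic expressions (entries only for
  j,k in {0,1}) as quadratic functionals of the (arbitrary, independent)
  data u, u_t: the (u,u) and (u_t,u_t) parts only see the symmetrised
  symbol, and a term S(u, u_t) equals the term S'(u_t, u) with swapped
  symbol S'(xi1,xi2) = S(xi2,xi1).\<close>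
definition qe_equiv :: "qexpr \<Rightarrow> qexpr \<Rightarrow> bool" where
  "qe_equiv R R' \<longleftrightarrow> (\<forall>x y.
      R 0 0 x y + R 0 0 y x = R' 0 0 x y + R' 0 0 y x
    \<and> R 1 1 x y + R 1 1 y x = R' 1 1 x y + R' 1 1 y x
    \<and> R 1 0 x y + R 0 1 y x = R' 1 0 x y + R' 0 1 y x)"

definition nf_expr :: "symb \<Rightarrow> symb \<Rightarrow> symb \<Rightarrow> qexpr" where
  "nf_expr a b c = (\<lambda>j k. if j = 0 \<and> k = 0 then a
                          else if j = 1 \<and> k = 1 then b
                          else if j = 1 \<and> k = 0 then c
                          else (\<lambda>x y. 0))"

text \<open>The right-hand side Q00(u_t,u_t) + Q01(u_t,u) + Q11(u,u).\<close>
definition rhs_expr :: "symb \<Rightarrow> symb \<Rightarrow> symb \<Rightarrow> qexpr" where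
  "rhs_expr q00 q01 q11 = nf_expr q11 q00 q01"

definition sym_symb :: "symb \<Rightarrow> bool" where
  "sym_symb p \<longleftrightarrow> (\<forall>x y. p x y = p y x)"

text \<open>The bilinear form maps real functions to real functions.\<close>
definition real_symb :: "symb \<Rightarrow> bool" where
  "real_symb p \<longleftrightarrow> (\<forall>x y. p (- x) (- y) = cnj (p x y))"

text \<open>A, B, C define a normal form transformation for the given quadratic
  nonlinearity: A, B symmetric, all real, and
  -Lambda_2(L_KG(A(u,u)+B(u_t,u_t)+C(u_t,u))) = Q00(u_t,u_t)+Q01(u_t,u)+Q11(u,u).
  (The time-derivative orders in L_KG applied to nf_expr are at most 3.)\<close>
definition is_normal_form :: "real \<Rightarrow> symb \<Rightarrow> symb \<Rightarrow> symb \<Rightarrow> symb \<Rightarrow> symb \<Rightarrow> symb \<Rightarrow> bool" where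
  "is_normal_form m q00 q01 q11 a b c \<longleftrightarrow>
     sym_symb a \<and> sym_symb b \<and> real_symb a \<and> real_symb b \<and> real_symb c \<and>
     qe_equiv (qe_neg (qe_Lambda2 m 3 (qe_LKG m (nf_expr a b c))))
              (rhs_expr q00 q01 q11)"

definition jbr1 :: "real \<Rightarrow> real" where "jbr1 x = sqrt (1 + x^2)"
definition jbr2 :: "real \<Rightarrow> real \<Rightarrow> real" where "jbr2 x y = sqrt (1 + x^2 + y^2)"

definition S1 :: "real \<Rightarrow> (real \<Rightarrow> complex) \<Rightarrow> bool" where
  "S1 n f \<longleftrightarrow> (\<exists>D :: nat \<Rightarrow> real \<Rightarrow> complex. D 0 = f \<and>
     (\<forall>k x. (D k has_vector_derivative D (Suc k) x) (at x)) \<and>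
     (\<forall>k. \<exists>C. \<forall>x. norm (D k x) \<le> C * jbr1 x powr (n - real k)))"

definition S2 :: "real \<Rightarrow> symb \<Rightarrow> bool" where
  "S2 n f \<longleftrightarrow> (\<exists>D :: nat \<Rightarrow> nat \<Rightarrow> symb. D 0 0 = f \<and>
     (\<forall>i j x y. ((\<lambda>t. D i j t y) has_vector_derivative D (Suc i) j x y) (at x)) \<and>
     (\<forall>i j x y. ((\<lambda>t. D i j x t) has_vector_derivative D i (Suc j) x y) (at y)) \<and>
     (\<forall>i j. \<exists>C. \<forall>x y. norm (D i j x y) \<le> C * jbr2 x y powr (n - real (i + j))))"

definition is_chi_hh :: "(real \<Rightarrow> real \<Rightarrow> real) \<Rightarrow> bool" where
  "is_chi_hh chi \<longleftrightarrow> S2 0 (\<lambda>x y. complex_of_real (chi x y)) \<and>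
     (\<forall>x y. 0 \<le> chi x y) \<and>
     (\<forall>x y. 1/10 \<le> jbr1 x / jbr1 y \<and> jbr1 x / jbr1 y \<le> 10 \<longrightarrow> chi x y = 1) \<and>
     (\<forall>x y. jbr1 x \<le> jbr1 y / 20 \<or> jbr1 y \<le> jbr1 x / 20 \<longrightarrow> chi x y = 0)"

end

theory Submission
  imports Defs
begin

lemma L00: "qe_Lambda2 m 3 (qe_LKG m (nf_expr a b c)) 0 0 x y =
   a x y * of_real (2*x*y - m) + 2 * b x y * of_real ((x^2+m)*(y^2+m))"
  unfolding qe_Lambda2_def qe_LKG_def qe_dt_def nf_expr_def
  by (simp add: numeral_3_eq_3 algebra_simps power2_eq_square)
lemma L11: "qe_Lambda2 m 3 (qe_LKG m (nf_expr a b c)) 1 1 x y =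
   b x y * of_real (2*x*y - m) + 2 * a x y"
  unfolding qe_Lambda2_def qe_LKG_def qe_dt_def nf_expr_def
  by (simp add: numeral_3_eq_3 algebra_simps power2_eq_square)
lemma L10: "qe_Lambda2 m 3 (qe_LKG m (nf_expr a b c)) 1 0 x y =
   c x y * of_real (2*x*y - m)"
  unfolding qe_Lambda2_def qe_LKG_def qe_dt_def nf_expr_def
  by (simp add: numeral_3_eq_3 algebra_simps power2_eq_square)
lemma L01: "qe_Lambda2 m 3 (qe_LKG m (nf_expr a b c)) 0 1 x y =
   - 2 * of_real (x^2+m) * c x y"
  unfolding qe_Lambda2_def qe_LKG_def qe_dt_def nf_expr_def
  by (simp add: numeral_3_eq_3 algebra_simps power2_eq_square)

lemma nf00: "nf_expr a b c 0 0 = a" and nf11: "nf_expr a b c 1 1 = b"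
  and nf10: "nf_expr a b c 1 0 = c" and nf01: "nf_expr a b c 0 1 = (\<lambda>x y. 0)"
  unfolding nf_expr_def by auto

lemma nf_iff: "is_normal_form m q00 q01 q11 a b c \<longleftrightarrow>
   sym_symb a \<and> sym_symb b \<and> real_symb a \<and> real_symb b \<and> real_symb c \<and>
   (\<forall>x y. - (a x y * of_real (2*x*y - m) + 2 * b x y * of_real ((x^2+m)*(y^2+m)))
           + - (a y x * of_real (2*y*x - m) + 2 * b y x * of_real ((y^2+m)*(x^2+m)))
          = q11 x y + q11 y x
       \<and> - (b x y * of_real (2*x*y - m) + 2 * a x y) + - (b y x * of_real (2*y*x - m) + 2 * a y x)
          = q00 x y + q00 y x
       \<and> - (c x y * of_real (2*x*y - m)) + - (- 2 * of_real (y^2+m) * c y x) = q01 x y + (\<lambda>x y. 0) y x)"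
  unfolding is_normal_form_def qe_equiv_def qe_neg_def rhs_expr_def L00 L11 L10 L01 nf00 nf11 nf10 nf01
  by (rule refl)

definition Dm :: "real \<Rightarrow> real \<Rightarrow> real \<Rightarrow> real" where
  "Dm m x y = -(4*m*(x^2+x*y+y^2) + 3*m^2)"

lemma Dm_pos: "0 < m \<Longrightarrow> Dm m x y < 0"
proof -
  assume m: "0 < m"
  have "0 \<le> x^2 + y^2 + (x+y)^2" by simp
  hence "0 \<le> x^2+x*y+y^2" by (simp add: power2_eq_square algebra_simps)
  thus ?thesis using m unfolding Dm_def
    by (smt (verit) mult_nonneg_nonneg zero_less_power)
qed

lemma Dm_eq: "Dm m x y = (2*x*y-m)^2 - 4*((x^2+m)*(y^2+m))"
  unfolding Dm_def by (simp add: power2_eq_square algebra_simps)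

lemma Dm_sym: "Dm m y x = Dm m x y" unfolding Dm_def by (simp add: algebra_simps)
lemma Dm_neg: "Dm m (-x) (-y) = Dm m x y" unfolding Dm_def by (simp add: algebra_simps)

definition asol :: "real \<Rightarrow> symb \<Rightarrow> symb \<Rightarrow> symb" where
  "asol m q00 q11 x y = (2 * of_real ((x^2+m)*(y^2+m)) * q00 x y - of_real (2*x*y-m) * q11 x y) / of_real (Dm m x y)"
definition bsol :: "real \<Rightarrow> symb \<Rightarrow> symb \<Rightarrow> symb" where
  "bsol m q00 q11 x y = (2 * q11 x y - of_real (2*x*y-m) * q00 x y) / of_real (Dm m x y)"
definition csol :: "real \<Rightarrow> symb \<Rightarrow> symb" where
  "csol m q01 x y = (- of_real (2*x*y-m) * q01 x y - 2 * of_real (y^2+m) * q01 y x) / of_real (Dm m x y)"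

lemma t1: fixes D p P q00 q11 :: complex
  assumes Dn: "D \<noteq> 0" and De: "D = p^2 - 4*P"
  shows "(2*P*q00 - p*q11)/D * p + 2 * ((2*q11 - p*q00)/D) * P = - q11"
proof -
  have k: "(2*P*q00 - p*q11) * p + 2 * (2*q11 - p*q00) * P = - q11 * D"
    unfolding De by (simp add: algebra_simps power2_eq_square)
  have "(2*P*q00 - p*q11)/D * p + 2 * ((2*q11 - p*q00)/D) * P = ((2*P*q00 - p*q11) * p + 2 * (2*q11 - p*q00) * P) / D"
    by (simp add: add_divide_distrib)
  also have "\<dots> = - q11" unfolding k using Dn by simp
  finally show ?thesis .
qed
lemma t2: fixes D p P q00 q11 :: complex
  assumes Dn: "D \<noteq> 0" and De: "D = p^2 - 4*P"
  shows "(2*q11 - p*q00)/D * p + 2 * ((2*P*q00 - p*q11)/D) = - q00"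
proof -
  have k: "(2*q11 - p*q00) * p + 2 * (2*P*q00 - p*q11) = - q00 * D"
    unfolding De by (simp add: algebra_simps power2_eq_square)
  have "(2*q11 - p*q00)/D * p + 2 * ((2*P*q00 - p*q11)/D) = ((2*q11 - p*q00) * p + 2 * (2*P*q00 - p*q11)) / D"
    by (simp add: add_divide_distrib)
  also have "\<dots> = - q00" unfolding k using Dn by simp
  finally show ?thesis .
qed
lemma t3: fixes D p w1 w2 u v :: complex
  assumes Dn: "D \<noteq> 0" and De: "D = p^2 - 4*(w1*w2)"
  shows "(- p * u - 2 * w2 * v)/D * p - 2 * w2 * ((- p * v - 2 * w1 * u)/D) = - u"
proof -
  have k: "(- p * u - 2 * w2 * v) * p - 2 * w2 * (- p * v - 2 * w1 * u) = - u * D"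
    unfolding De by (simp add: algebra_simps power2_eq_square)
  have "(- p * u - 2 * w2 * v)/D * p - 2 * w2 * ((- p * v - 2 * w1 * u)/D) = ((- p * u - 2 * w2 * v) * p - 2 * w2 * (- p * v - 2 * w1 * u)) / D"
    by (simp add: divide_inverse algebra_simps)
  also have "\<dots> = - u" unfolding k using Dn by simp
  finally show ?thesis .
qed

lemma Dn: "0 < m \<Longrightarrow> (of_real (Dm m x y) :: complex) \<noteq> 0"
  using Dm_pos by (metis of_real_eq_0_iff less_irrefl)
lemma DE: "(of_real (Dm m x y) :: complex) = of_real (2*x*y-m) ^2 - 4 * of_real ((x^2+m)*(y^2+m))"
  by (simp only: Dm_eq of_real_diff of_real_power of_real_mult of_real_numeral)
lemma DE2: "(of_real (Dm m x y) :: complex) = of_real (2*x*y-m) ^2 - 4 * (of_real (x^2+m) * of_real (y^2+m))"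
  by (simp only: Dm_eq of_real_diff of_real_power of_real_mult of_real_numeral)

lemma e1: "0 < m \<Longrightarrow> asol m q00 q11 x y * of_real (2*x*y - m) + 2 * bsol m q00 q11 x y * of_real ((x^2+m)*(y^2+m)) = - q11 x y"
  unfolding asol_def bsol_def by (rule t1[OF Dn DE])
lemma e2: "0 < m \<Longrightarrow> bsol m q00 q11 x y * of_real (2*x*y - m) + 2 * asol m q00 q11 x y = - q00 x y"
  unfolding asol_def bsol_def by (rule t2[OF Dn DE])
lemma e3: "0 < m \<Longrightarrow> csol m q01 x y * of_real (2*x*y - m) - 2 * of_real (y^2+m) * csol m q01 y x = - q01 x y"
proof -
  assume m: "0 < m"
  have a: "(of_real (Dm m y x) :: complex) = of_real (Dm m x y)" by (simp only: Dm_sym)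
  have b: "(of_real (2*y*x - m) :: complex) = of_real (2*x*y - m)" by (simp only: mult.commute mult.left_commute)
  show ?thesis unfolding csol_def a b by (rule t3[OF Dn[OF m] DE2])
qed

lemma exist_nf:
  assumes m: "0 < m" and s: "sym_symb q00" "sym_symb q11"
    and r: "real_symb q00" "real_symb q01" "real_symb q11"
  shows "is_normal_form m q00 q01 q11 (asol m q00 q11) (bsol m q00 q11) (csol m q01)"
  unfolding nf_iff
proof (intro conjI allI)
    show "sym_symb (asol m q00 q11)" using s unfolding sym_symb_def asol_def
      by (simp add: Dm_sym mult.commute mult.left_commute)
    show "sym_symb (bsol m q00 q11)" using s unfolding sym_symb_def bsol_def
      by (simp add: Dm_sym mult.commute mult.left_commute)
    show "real_symb (asol m q00 q11)" using r unfolding real_symb_def asol_def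
      by (simp add: Dm_neg)
    show "real_symb (bsol m q00 q11)" using r unfolding real_symb_def bsol_def
      by (simp add: Dm_neg)
    show "real_symb (csol m q01)" using r unfolding real_symb_def csol_def
      by (simp add: Dm_neg)
  next
    fix x y
    show "- (asol m q00 q11 x y * of_real (2*x*y - m) + 2 * bsol m q00 q11 x y * of_real ((x^2+m)*(y^2+m)))
           + - (asol m q00 q11 y x * of_real (2*y*x - m) + 2 * bsol m q00 q11 y x * of_real ((y^2+m)*(x^2+m)))
          = q11 x y + q11 y x"
      by (simp only: e1[OF m]) simp
    show "- (bsol m q00 q11 x y * of_real (2*x*y - m) + 2 * asol m q00 q11 x y) + - (bsol m q00 q11 y x * of_real (2*y*x - m) + 2 * asol m q00 q11 y x)
          = q00 x y + q00 y x"
      by (simp only: e2[OF m]) simp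
    have "- (csol m q01 x y * of_real (2*x*y - m)) + - (- 2 * of_real (y^2+m) * csol m q01 y x)
       = - (csol m q01 x y * of_real (2*x*y - m) - 2 * of_real (y^2+m) * csol m q01 y x)"
      by (simp add: algebra_simps)
    also have "\<dots> = q01 x y" by (simp only: e3[OF m] minus_minus)
    finally show "- (csol m q01 x y * of_real (2*x*y - m)) + - (- 2 * of_real (y^2+m) * csol m q01 y x) = q01 x y + (\<lambda>x y. 0) y x"
      by simp
qed

lemma u1: fixes D p P q00 q11 a b :: complex
  assumes Dn: "D \<noteq> 0" and De: "D = p^2 - 4*P"
    and h1: "a * p + 2 * b * P = - q11" and h2: "b * p + 2 * a = - q00"
  shows "a = (2*P*q00 - p*q11)/D \<and> b = (2*q11 - p*q00)/D"
proof -
  have q11: "q11 = - (a * p + 2 * b * P)" using h1 by simp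
  have q00: "q00 = - (b * p + 2 * a)" using h2 by simp
  have "a * D = 2*P*q00 - p*q11" unfolding De q11 q00 by (simp add: algebra_simps power2_eq_square)
  moreover have "b * D = 2*q11 - p*q00" unfolding De q11 q00 by (simp add: algebra_simps power2_eq_square)
  ultimately show ?thesis using Dn by (simp add: eq_divide_eq)
qed
lemma u3: fixes D p w1 w2 u v c1 c2 :: complex
  assumes Dn: "D \<noteq> 0" and De: "D = p^2 - 4*(w1*w2)"
    and h1: "c1 * p - 2 * w2 * c2 = - u" and h2: "c2 * p - 2 * w1 * c1 = - v"
  shows "c1 = (- p * u - 2 * w2 * v)/D"
proof -
  have u: "u = - (c1 * p - 2 * w2 * c2)" using h1 by simp
  have v: "v = - (c2 * p - 2 * w1 * c1)" using h2 by simp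
  have "c1 * D = - p * u - 2 * w2 * v" unfolding De u v by (simp add: algebra_simps power2_eq_square)
  thus ?thesis using Dn by (simp add: eq_divide_eq)
qed

lemma uniq_nf:
  assumes m: "0 < m" and s: "sym_symb q00" "sym_symb q11"
    and nf: "is_normal_form m q00 q01 q11 a b c"
  shows "a = asol m q00 q11 \<and> b = bsol m q00 q11 \<and> c = csol m q01"
proof -
  note N = nf[unfolded nf_iff]
  have sa: "\<And>x y. a y x = a x y" and sb: "\<And>x y. b y x = b x y"
    using N unfolding sym_symb_def by metis+
  have sq: "\<And>x y. q00 y x = q00 x y" "\<And>x y. q11 y x = q11 x y"
    using s unfolding sym_symb_def by metis+
  have pc: "\<And>x y. (of_real (2*y*x-m) :: complex) = of_real (2*x*y-m)" by (simp only: mult.commute mult.left_commute)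
  have Pc: "\<And>x y. (of_real ((y^2+m)*(x^2+m)) :: complex) = of_real ((x^2+m)*(y^2+m))" by (simp only: mult.commute)
  have ab: "a x y = asol m q00 q11 x y \<and> b x y = bsol m q00 q11 x y" for x y
  proof -
    have E1: "- (a x y * of_real (2*x*y - m) + 2 * b x y * of_real ((x^2+m)*(y^2+m)))
           + - (a y x * of_real (2*y*x - m) + 2 * b y x * of_real ((y^2+m)*(x^2+m)))
          = q11 x y + q11 y x"
     and E2: "- (b x y * of_real (2*x*y - m) + 2 * a x y) + - (b y x * of_real (2*y*x - m) + 2 * a y x)
          = q00 x y + q00 y x" using N by blast+
    have "- (2 * (a x y * of_real (2*x*y - m) + 2 * b x y * of_real ((x^2+m)*(y^2+m)))) = 2 * q11 x y"
      using E1 unfolding sa[of x y] sb[of x y] pc[of x y] Pc[of x y] sq(2)[of x y] by (simp add: algebra_simps)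
    hence "2 * (a x y * of_real (2*x*y - m) + 2 * b x y * of_real ((x^2+m)*(y^2+m))) = 2 * (- q11 x y)"
      by (simp only: minus_equation_iff mult_minus_right)
    hence h1: "a x y * of_real (2*x*y - m) + 2 * b x y * of_real ((x^2+m)*(y^2+m)) = - q11 x y"
      by (simp only: mult_cancel_left) simp
    have "- (2 * (b x y * of_real (2*x*y - m) + 2 * a x y)) = 2 * q00 x y"
      using E2 unfolding sa[of x y] sb[of x y] pc[of x y] sq(1)[of x y] by (simp add: algebra_simps)
    hence "2 * (b x y * of_real (2*x*y - m) + 2 * a x y) = 2 * (- q00 x y)"
      by (simp only: minus_equation_iff mult_minus_right)
    hence h2: "b x y * of_real (2*x*y - m) + 2 * a x y = - q00 x y"
      by (simp only: mult_cancel_left) simp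
    show ?thesis unfolding asol_def bsol_def using u1[OF Dn[OF m] DE h1 h2] by simp
  qed
  have cc: "c x y = csol m q01 x y" for x y
  proof -
    have E: "\<And>x y. - (c x y * of_real (2*x*y - m)) + - (- 2 * of_real (y^2+m) * c y x) = q01 x y + (\<lambda>x y. 0) y x"
      using N by blast
    have h1: "c x y * of_real (2*x*y - m) - 2 * of_real (y^2+m) * c y x = - q01 x y"
      using E[of x y] by (simp add: algebra_simps)
    have h2: "c y x * of_real (2*x*y - m) - 2 * of_real (x^2+m) * c x y = - q01 y x"
      using E[of y x] unfolding pc[of y x] by (simp add: algebra_simps)
    show ?thesis unfolding csol_def using u3[OF Dn[OF m] DE2 h1 h2] by simp
  qed
  show ?thesis using ab cc by (auto intro!: ext)
qed

primrec hp :: "complex list \<Rightarrow> complex \<Rightarrow> complex" where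
  "hp [] X = 0" | "hp (c # cs) X = c + X * hp cs X"
lemma id_a: fixes X Y M iM al0 al1 be0 be1 be2 be3 be4 ga0 ga1 ga2 ga3 ga4 :: complex
  assumes M: "M \<noteq> 0" and iM: "iM = inverse M"
  shows "(2 * ((X^2 + M) * (Y^2 + M)) * (al0 + al1 * (\<i> * (X + Y))) - (2 * X * Y - M) * (ga0 + ga1 * (\<i> * (X + Y)) + ga2 * (X * Y) + ga3 * (X^2 + Y^2) + ga4 * (\<i> * (X^2 * Y + X * Y^2)))) =
    (hp [(- (1/2 * \<i> * al1)), ((1/2 * iM * ga3)), ((1/2 * iM * \<i> * ga4) - (1/2 * iM * \<i> * al1))] X * Y + hp [(- (1/4 * ga3) - (1/2 * al0)), (- (1/4 * \<i> * ga4) + (1/2 * iM * \<i> * ga1)), (- (1/2 * iM * ga3) + (1/2 * iM * ga2) - (1/2 * iM * al0))] X) * (- (4 * M * (X^2 + X * Y + Y^2) + 3 * M^2)) + hp [((M * \<i> * ga1) + (1/2 * M^2 * \<i> * al1)), (- (2 * ga0) + (1/2 * M * ga3) + (M * ga2) - (2 * M * al0)), ((3/2 * M * \<i> * ga4) - (3/2 * M * \<i> * al1)), (- (2 * ga3) + (2 * ga2) - (2 * al0)), ((2 * \<i> * ga4) - (2 * \<i> * al1))] X * Y + hp [((M * ga0) - (3/4 * M^2 * ga3) + (1/2 * M^2 * al0)), ((5/2 * M * \<i> * ga1) - (3/4 * M^2 * \<i> * ga4) + (2 * M^2 * \<i> * al1)), (- (3/2 * M * ga3) + (3/2 * M * ga2)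 - (3/2 * M * al0)), ((2 * \<i> * ga1) - (M * \<i> * ga4) + (2 * M * \<i> * al1)), (- (2 * ga3) + (2 * ga2) - (2 * al0))] X"
  unfolding iM using M by (simp add: field_simps) (simp add: algebra_simps power2_eq_square power3_eq_cube power4_eq_xxxx)

lemma id_b: fixes X Y M iM al0 al1 be0 be1 be2 be3 be4 ga0 ga1 ga2 ga3 ga4 :: complex
  assumes M: "M \<noteq> 0" and iM: "iM = inverse M"
  shows "(2 * (ga0 + ga1 * (\<i> * (X + Y)) + ga2 * (X * Y) + ga3 * (X^2 + Y^2) + ga4 * (\<i> * (X^2 * Y + X * Y^2))) - (2 * X * Y - M) * (al0 + al1 * (\<i> * (X + Y)))) * Y =
    (hp [(- (1/2 * iM * ga3)), (- (1/2 * iM * \<i> * ga4) + (1/2 * iM * \<i> * al1))] X * Y + hp [(- (1/4 * \<i> * al1) - (1/2 * iM * \<i> * ga1)), ((1/2 * iM * ga3) - (1/2 * iM * ga2) + (1/2 * iM * al0))] X) * (- (4 * M * (X^2 + X * Y + Y^2) + 3 * M^2)) + hp [((2 * ga0) - (3/2 * M * ga3) + (M * al0)), (- (3/2 * M * \<i> * ga4) + (3/2 * M * \<i> * al1)), ((2 * ga3) - (2 * ga2) + (2 * al0)), (- (2 * \<i> * ga4) + (2 * \<i> * al1))] X * Y + hp [(- (3/2 * M * \<i> * ga1) - (3/4 * M^2 * \<i> * al1)), ((3/2 * M * ga3) - (3/2 * M * ga2) + (3/2 * M * al0)), (- (2 * \<i> * ga1) - (M * \<i> * al1)), ((2 * ga3)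 - (2 * ga2) + (2 * al0))] X"
  unfolding iM using M by (simp add: field_simps) (simp add: algebra_simps power2_eq_square power3_eq_cube power4_eq_xxxx)

lemma id_c1: fixes X Y M iM al0 al1 be0 be1 be2 be3 be4 ga0 ga1 ga2 ga3 ga4 :: complex
  assumes M: "M \<noteq> 0" and iM: "iM = inverse M"
  shows "(- (2 * X * Y - M) * (be0 + be1 * (\<i> * X) + be2 * (\<i> * Y) + be3 * (X * Y) + be4 * Y^2) - 2 * (Y^2 + M) * (be0 + be1 * (\<i> * Y) + be2 * (\<i> * X) + be3 * (Y * X) + be4 * X^2)) =
    (hp [((1/2 * iM * \<i> * be1)), ((1/2 * iM * be4) + (1/2 * iM * be3))] X * Y + hp [(- (1/4 * be4) + (1/2 * iM * be0)), ((iM * \<i> * be2) - (1/2 * iM * \<i> * be1))] X) * (- (4 * M * (X^2 + X * Y + Y^2) + 3 * M^2)) + hp [((M * \<i> * be2) - (1/2 * M * \<i> * be1)), ((1/2 * M * be4) + (1/2 * M * be3)), ((4 * \<i> * be2) - (2 * \<i> * be1)), ((2 * be4) + (2 * be3))] X * Y + hp [((1/2 * M * be0) - (3/4 * M^2 * be4)), ((M * \<i> * be2) - (1/2 * M * \<i> * be1)), ((2 * be0) - (3 * M * be4)), ((4 * \<i> * be2) - (2 * \<i> * be1))] X"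
  unfolding iM using M by (simp add: field_simps) (simp add: algebra_simps power2_eq_square power3_eq_cube power4_eq_xxxx)

lemma id_c2: fixes X Y M iM al0 al1 be0 be1 be2 be3 be4 ga0 ga1 ga2 ga3 ga4 :: complex
  assumes M: "M \<noteq> 0" and iM: "iM = inverse M"
  shows "(- (2 * X * Y - M) * (be0 + be1 * (\<i> * X) + be2 * (\<i> * Y) + be3 * (X * Y) + be4 * Y^2) - 2 * (Y^2 + M) * (be0 + be1 * (\<i> * Y) + be2 * (\<i> * X) + be3 * (Y * X) + be4 * X^2)) * X =
    (hp [((1/2 * be4)), ((1/2 * iM * \<i> * be1)), ((1/2 * iM * be4) + (1/2 * iM * be3))] Y * X + hp [((1/2 * \<i> * be2) - (1/4 * \<i> * be1)), (- (1/2 * be4) + (1/4 * be3) + (1/2 * iM * be0)), ((iM * \<i> * be2) - (1/2 * iM * \<i> * be1))] Y) * (- (4 * M * (X^2 + X * Y + Y^2) + 3 * M^2)) + hp [(- (M * be0) + (3/2 * M^2 * be4)), ((3 * M * \<i> * be2) - (3/2 * M * \<i> * be1)), ((5/2 * M * be4) + (5/2 * M * be3)), ((4 * \<i> * be2) - (2 * \<i> * be1)), ((2 * be4) + (2 * be3))] Y * X + hp [((3/2 * M^2 * \<i> * be2) - (3/4 * M^2 * \<i> * be1)), ((3/2 * M * be0) - (3/2 * M^2 * be4) + (3/4 * M^2 * be3)), ((5 * M * \<i> * be2) - (5/2 * M * \<i> * be1)), ((2 * be0) - (2 * M * be4) + (M * be3)), ((4 * \<i> * be2) - (2 * \<i>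 * be1))] Y"
  unfolding iM using M by (simp add: field_simps) (simp add: algebra_simps power2_eq_square power3_eq_cube power4_eq_xxxx)

lemma jbr1_ge1: "1 \<le> jbr1 x" unfolding jbr1_def by simp
lemma jbr1_abs: "\<bar>x\<bar> \<le> jbr1 x" unfolding jbr1_def by (simp add: real_le_rsqrt)
lemma jbr1_pow: "real j \<le> e \<Longrightarrow> jbr1 x ^ j \<le> jbr1 x powr e"
proof -
  assume "real j \<le> e"
  have p: "0 < jbr1 x" using jbr1_ge1[of x] by simp
  have "jbr1 x ^ j = jbr1 x powr real j" using powr_realpow[OF p] by simp
  also have "\<dots> \<le> jbr1 x powr e" using \<open>real j \<le> e\<close> jbr1_ge1 by (rule powr_mono)
  finally show ?thesis .
qed

fun qD :: "complex \<Rightarrow> complex \<Rightarrow> complex \<Rightarrow> nat \<Rightarrow> real \<Rightarrow> complex" where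
  "qD c0 c1 c2 0 x = c0 + c1 * of_real x + c2 * of_real x ^ 2"
| "qD c0 c1 c2 (Suc 0) x = c1 + 2 * c2 * of_real x"
| "qD c0 c1 c2 (Suc (Suc 0)) x = 2 * c2"
| "qD c0 c1 c2 (Suc (Suc (Suc k))) x = 0"

lemma k_cases: obtains "k = 0" | "k = Suc 0" | "k = Suc (Suc 0)" | j where "k = Suc (Suc (Suc j))"
  by (metis not0_implies_Suc)

lemma qD_deriv: "(qD c0 c1 c2 k has_vector_derivative qD c0 c1 c2 (Suc k) x) (at x)"
proof (cases k rule: k_cases)
  case 1
  have "((\<lambda>z. c0 + c1 * z + c2 * z ^ 2) has_field_derivative (c1 + 2 * c2 * of_real x)) (at (of_real x))"
    by (auto intro!: derivative_eq_intros)
  from has_vector_derivative_real_field[OF this, where s=UNIV]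
  have d: "((\<lambda>x. c0 + c1 * of_real x + c2 * of_real x ^ 2) has_vector_derivative (c1 + 2 * c2 * of_real x)) (at x)"
    by simp
  have a: "qD c0 c1 c2 0 = (\<lambda>x. c0 + c1 * of_real x + c2 * of_real x ^ 2)" by (rule ext) simp
  show ?thesis unfolding 1 a using d by simp
next
  case 2
  have "((\<lambda>z. c1 + 2 * c2 * z) has_field_derivative (2 * c2)) (at (of_real x))"
    by (auto intro!: derivative_eq_intros)
  from has_vector_derivative_real_field[OF this, where s=UNIV]
  have d: "((\<lambda>x. c1 + 2 * c2 * of_real x) has_vector_derivative (2 * c2)) (at x)" by simp
  have a: "qD c0 c1 c2 (Suc 0) = (\<lambda>x. c1 + 2 * c2 * of_real x)" by (rule ext) simp
  show ?thesis unfolding 2 a using d by simp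
next
  case 3
  have e: "qD c0 c1 c2 k = (\<lambda>x. 2 * c2)" using 3 by (simp add: fun_eq_iff)
  show ?thesis unfolding e using 3 by simp
next
  case (4 j)
  have e: "qD c0 c1 c2 k = (\<lambda>x. 0)" using 4 by (simp add: fun_eq_iff)
  show ?thesis unfolding e using 4 by simp
qed

lemma le_mul1: "0 \<le> (a::real) \<Longrightarrow> 1 \<le> b \<Longrightarrow> a \<le> a * b"
  by (metis mult_left_mono mult.right_neutral)

lemma qD_bound:
  assumes n: "(c2 = 0 \<and> 1 \<le> n) \<or> 2 \<le> n"
  shows "\<exists>C. \<forall>x. norm (qD c0 c1 c2 k x) \<le> C * jbr1 x powr (n - real k)"
proof -
  let ?C = "norm c0 + norm c1 + norm c2"
  have g1: "1 \<le> jbr1 x" and ga: "\<bar>x\<bar> \<le> jbr1 x" for x using jbr1_ge1 jbr1_abs by auto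
  have g2: "1 \<le> jbr1 x ^ 2" for x using g1[of x] one_le_power by blast
  have ga2: "\<bar>x\<bar> \<le> jbr1 x ^ 2" for x
  proof -
    have "jbr1 x \<le> jbr1 x * jbr1 x" using g1[of x] by (intro le_mul1) auto
    thus ?thesis using ga[of x] by (simp add: power2_eq_square)
  qed
  have gs: "x^2 \<le> jbr1 x ^ 2" for x using ga[of x] by (metis abs_ge_zero power2_abs power_mono)
  have tri: "norm (qD c0 c1 c2 0 x) \<le> norm c0 + norm c1 * \<bar>x\<bar> + norm c2 * x^2" for x
  proof -
    have "norm (qD c0 c1 c2 0 x) \<le> norm (c0 + c1 * of_real x) + norm (c2 * of_real x ^ 2)"
      by (simp only: qD.simps norm_triangle_ineq)
    also have "\<dots> \<le> norm c0 + norm (c1 * of_real x) + norm (c2 * of_real x ^ 2)"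
      by (simp only: add_right_mono norm_triangle_ineq)
    also have "\<dots> = norm c0 + norm c1 * \<bar>x\<bar> + norm c2 * x^2"
      by (simp add: norm_mult norm_power)
    finally show ?thesis .
  qed
  show ?thesis
  proof (cases k rule: k_cases)
      case 1
      show ?thesis
      proof (cases "c2 = 0 \<and> 1 \<le> n")
        case True
        have "norm (qD c0 c1 c2 k x) \<le> (norm c0 + norm c1) * jbr1 x powr (n - real k)" for x
        proof -
          have "norm (qD c0 c1 c2 k x) \<le> norm c0 + norm c1 * \<bar>x\<bar>" using 1 True tri[of x] by simp
          also have "\<dots> \<le> norm c0 * jbr1 x + norm c1 * jbr1 x"
            using le_mul1[OF norm_ge_zero g1[of x]] mult_left_mono[OF ga[of x] norm_ge_zero] by (rule add_mono)
          also have "\<dots> = (norm c0 + norm c1) * jbr1 x ^ 1" by (simp add: algebra_simps)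
          also have "\<dots> \<le> (norm c0 + norm c1) * jbr1 x powr (n - real k)"
            using True 1 by (intro mult_left_mono jbr1_pow) auto
          finally show ?thesis .
        qed
        thus ?thesis by blast
      next
        case False
        hence n2: "2 \<le> n" using n by auto
        have "norm (qD c0 c1 c2 k x) \<le> ?C * jbr1 x powr (n - real k)" for x
        proof -
          have "norm (qD c0 c1 c2 k x) \<le> norm c0 + norm c1 * \<bar>x\<bar> + norm c2 * x^2" using 1 tri[of x] by simp
          also have "\<dots> \<le> norm c0 * jbr1 x^2 + norm c1 * jbr1 x^2 + norm c2 * jbr1 x^2"
            using le_mul1[OF norm_ge_zero g2[of x]] mult_left_mono[OF ga2[of x] norm_ge_zero]
              mult_left_mono[OF gs[of x] norm_ge_zero] by (intro add_mono)
          also have "\<dots> = ?C * jbr1 x ^ 2" by (simp add: algebra_simps)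
          also have "\<dots> \<le> ?C * jbr1 x powr (n - real k)"
            using n2 1 by (intro mult_left_mono jbr1_pow) auto
          finally show ?thesis .
        qed
        thus ?thesis by blast
      qed
    next
      case 2
      have "norm (qD c0 c1 c2 k x) \<le> (norm c1 + 2 * norm c2) * jbr1 x powr (n - real k)" for x
      proof -
        have nb: "norm (qD c0 c1 c2 k x) \<le> norm c1 + 2 * norm c2 * \<bar>x\<bar>"
        proof -
          have "norm (qD c0 c1 c2 k x) \<le> norm c1 + norm (2 * c2 * of_real x)"
            unfolding 2 qD.simps by (rule norm_triangle_ineq)
          thus ?thesis by (simp add: norm_mult)
        qed
        show ?thesis
        proof (cases "c2 = 0")
          case True
          have "1 \<le> n" using n True by auto
          hence "1 \<le> jbr1 x powr (n - real k)" using 2 jbr1_pow[of 0 "n - real k" x] by simp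
          hence "norm c1 \<le> norm c1 * jbr1 x powr (n - real k)" by (rule le_mul1[OF norm_ge_zero])
          thus ?thesis using nb True by simp
        next
          case False
          hence n2: "2 \<le> n" using n by auto
          have "norm c1 + 2 * norm c2 * \<bar>x\<bar> \<le> norm c1 * jbr1 x + 2 * norm c2 * jbr1 x"
            using le_mul1[OF norm_ge_zero g1[of x]] mult_left_mono[OF ga[of x], of "2 * norm c2"] by (intro add_mono) auto
          also have "\<dots> = (norm c1 + 2 * norm c2) * jbr1 x ^ 1" by (simp add: algebra_simps)
          also have "\<dots> \<le> (norm c1 + 2 * norm c2) * jbr1 x powr (n - real k)"
            using n2 2 by (intro mult_left_mono jbr1_pow) auto
          finally show ?thesis using nb by simp
        qed
      qed
      thus ?thesis by blast
    next
      case 3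
      have "norm (qD c0 c1 c2 k x) \<le> (2 * norm c2) * jbr1 x powr (n - real k)" for x
      proof (cases "c2 = 0")
        case True thus ?thesis using 3 by simp
      next
        case False
        hence n2: "2 \<le> n" using n by auto
        have "1 \<le> jbr1 x powr (n - real k)" using n2 3 jbr1_pow[of 0 "n - real k" x] by simp
        hence "2 * norm c2 \<le> 2 * norm c2 * jbr1 x powr (n - real k)" by (intro le_mul1) auto
        thus ?thesis using 3 by (simp add: norm_mult)
      qed
      thus ?thesis by blast
    next
      case (4 j)
      thus ?thesis by (intro exI[of _ 0]) simp
  qed
qed

lemma S1_quad:
  assumes n: "(c2 = 0 \<and> 1 \<le> n) \<or> 2 \<le> n"
  shows "S1 n (\<lambda>x. c0 + c1 * of_real x + c2 * of_real x ^ 2)"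
proof -
  have a: "qD c0 c1 c2 0 = (\<lambda>x. c0 + c1 * of_real x + c2 * of_real x ^ 2)" by (rule ext) simp
  have b: "\<forall>k x. (qD c0 c1 c2 k has_vector_derivative qD c0 c1 c2 (Suc k) x) (at x)"
    using qD_deriv by blast
  have c: "\<forall>k. \<exists>C. \<forall>x. norm (qD c0 c1 c2 k x) \<le> C * jbr1 x powr (n - real k)"
    using qD_bound[OF n] by blast
  show ?thesis unfolding S1_def using a b c by blast
qed

lemma S1_hp3: "2 \<le> n \<Longrightarrow> S1 n (\<lambda>x. hp [c0, c1, c2] (of_real x))"
proof -
  assume "2 \<le> n"
  hence "S1 n (\<lambda>x. c0 + c1 * of_real x + c2 * of_real x ^ 2)" by (intro S1_quad) auto
  moreover have "(\<lambda>x. hp [c0, c1, c2] (of_real x)) = (\<lambda>x. c0 + c1 * of_real x + c2 * of_real x ^ 2)"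
    by (simp add: fun_eq_iff algebra_simps power2_eq_square)
  ultimately show ?thesis by simp
qed
lemma S1_hp2: "1 \<le> n \<Longrightarrow> S1 n (\<lambda>x. hp [c0, c1] (of_real x))"
proof -
  assume "1 \<le> n"
  hence "S1 n (\<lambda>x. c0 + c1 * of_real x + 0 * of_real x ^ 2)" by (intro S1_quad) auto
  moreover have "(\<lambda>x. hp [c0, c1] (of_real x)) = (\<lambda>x. c0 + c1 * of_real x + 0 * of_real x ^ 2)"
    by (simp add: fun_eq_iff algebra_simps)
  ultimately show ?thesis by simp
qed

lemma hp_bound: "norm (hp cs (of_real x)) \<le> (\<Sum>c\<leftarrow>cs. norm c) * (1 + \<bar>x\<bar>) ^ (length cs - 1)"
proof (induction cs)
  case Nil thus ?case by simp
next
  case (Cons c cs)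
  show ?case
  proof (cases "cs = []")
    case True thus ?thesis by simp
  next
    case False
    then obtain k where k: "length cs = Suc k" by (cases cs) auto
    have S: "0 \<le> (\<Sum>c\<leftarrow>cs. norm c)" by (induction cs) auto
    have "norm (hp (c # cs) (of_real x)) \<le> norm c + \<bar>x\<bar> * norm (hp cs (of_real x))"
      by (simp) (metis norm_mult norm_of_real norm_triangle_ineq)
    also have "\<dots> \<le> norm c + \<bar>x\<bar> * ((\<Sum>c\<leftarrow>cs. norm c) * (1 + \<bar>x\<bar>) ^ k)"
      using Cons.IH k by (intro add_left_mono mult_left_mono) auto
    also have "\<dots> \<le> norm c * (1 + \<bar>x\<bar>) ^ Suc k + (\<Sum>c\<leftarrow>cs. norm c) * (1 + \<bar>x\<bar>) ^ Suc k"
    proof (intro add_mono)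
      have "1 \<le> (1 + \<bar>x\<bar>) ^ Suc k" by (intro one_le_power) auto
      thus "norm c \<le> norm c * (1 + \<bar>x\<bar>) ^ Suc k"
        by (simp add: mult_le_cancel_left1)
      have "\<bar>x\<bar> * ((\<Sum>c\<leftarrow>cs. norm c) * (1 + \<bar>x\<bar>) ^ k) \<le> (1 + \<bar>x\<bar>) * ((\<Sum>c\<leftarrow>cs. norm c) * (1 + \<bar>x\<bar>) ^ k)"
        using S by (intro mult_right_mono) auto
      thus "\<bar>x\<bar> * ((\<Sum>c\<leftarrow>cs. norm c) * (1 + \<bar>x\<bar>) ^ k) \<le> (\<Sum>c\<leftarrow>cs. norm c) * (1 + \<bar>x\<bar>) ^ Suc k"
        by (simp add: algebra_simps)
    qed
    also have "\<dots> = (\<Sum>c\<leftarrow>c # cs. norm c) * (1 + \<bar>x\<bar>) ^ (length (c # cs) - 1)"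
      using k by (simp add: algebra_simps)
    finally show ?thesis .
  qed
qed

datatype ex = EC complex | VX | VY | EA nat nat | EAdd ex ex | EMul ex ex | EInv ex

primrec ev :: "(nat \<Rightarrow> nat \<Rightarrow> symb) \<Rightarrow> ex \<Rightarrow> symb" where
  "ev F (EC c) = (\<lambda>x y. c)"
| "ev F VX = (\<lambda>x y. of_real x)"
| "ev F VY = (\<lambda>x y. of_real y)"
| "ev F (EA i j) = F i j"
| "ev F (EAdd a b) = (\<lambda>x y. ev F a x y + ev F b x y)"
| "ev F (EMul a b) = (\<lambda>x y. ev F a x y * ev F b x y)"
| "ev F (EInv a) = (\<lambda>x y. inverse (ev F a x y))"

primrec dX :: "ex \<Rightarrow> ex" where
  "dX (EC c) = EC 0"
| "dX VX = EC 1"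
| "dX VY = EC 0"
| "dX (EA i j) = EA (Suc i) j"
| "dX (EAdd a b) = EAdd (dX a) (dX b)"
| "dX (EMul a b) = EAdd (EMul (dX a) b) (EMul a (dX b))"
| "dX (EInv a) = EMul (EMul (EC (-1)) (dX a)) (EMul (EInv a) (EInv a))"

primrec dY :: "ex \<Rightarrow> ex" where
  "dY (EC c) = EC 0"
| "dY VX = EC 0"
| "dY VY = EC 1"
| "dY (EA i j) = EA i (Suc j)"
| "dY (EAdd a b) = EAdd (dY a) (dY b)"
| "dY (EMul a b) = EAdd (EMul (dY a) b) (EMul a (dY b))"
| "dY (EInv a) = EMul (EMul (EC (-1)) (dY a)) (EMul (EInv a) (EInv a))"

definition fam :: "(nat \<Rightarrow> nat \<Rightarrow> symb) \<Rightarrow> bool" where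
  "fam F \<longleftrightarrow> (\<forall>i j x y. ((\<lambda>t. F i j t y) has_vector_derivative F (Suc i) j x y) (at x)) \<and>
     (\<forall>i j x y. ((\<lambda>t. F i j x t) has_vector_derivative F i (Suc j) x y) (at y)) \<and>
     (\<forall>i j. \<exists>C. \<forall>x y. norm (F i j x y) \<le> C * jbr2 x y powr (0 - real (i + j)))"

inductive HO :: "(nat \<Rightarrow> nat \<Rightarrow> symb) \<Rightarrow> ex \<Rightarrow> real \<Rightarrow> bool" for F where
  c0: "HO F (EC 0) n"
| cc: "0 \<le> n \<Longrightarrow> HO F (EC c) n"
| x: "1 \<le> n \<Longrightarrow> HO F VX n"
| y: "1 \<le> n \<Longrightarrow> HO F VY n"
| at: "- real (i + j) \<le> n \<Longrightarrow> HO F (EA i j) n"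
| add: "HO F a n \<Longrightarrow> HO F b n \<Longrightarrow> HO F (EAdd a b) n"
| mul: "HO F a n1 \<Longrightarrow> HO F b n2 \<Longrightarrow> n1 + n2 \<le> n \<Longrightarrow> HO F (EMul a b) n"
| inv: "HO F a k \<Longrightarrow> c > 0 \<Longrightarrow> (\<forall>x y. c * jbr2 x y powr k \<le> norm (ev F a x y)) \<Longrightarrow> - k \<le> n \<Longrightarrow> HO F (EInv a) n"

lemma HO_mono: "HO F e n \<Longrightarrow> n \<le> n' \<Longrightarrow> HO F e n'"
proof (induction arbitrary: n' rule: HO.induct)
  case (mul a n1 b n2 n) thus ?case by (intro HO.mul[of F a n1 b n2]) auto
next
  case (inv a k c n) thus ?case by (intro HO.inv[of F a k c]) auto
qed (auto intro: HO.intros)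

lemma HO_dX: "HO F e n \<Longrightarrow> HO F (dX e) (n - 1)"
proof (induction rule: HO.induct)
  case (mul a n1 b n2 n)
  show ?case by (simp, intro HO.add HO.mul[of F _ "n1 - 1" _ n2] HO.mul[of F _ n1 _ "n2 - 1"]) (use mul in auto)
next
  case (inv a k c n)
  have ia: "HO F (EInv a) (-k)" using inv by (intro HO.inv[of F a k c]) auto
  show ?case
    by (simp, intro HO.mul[of F _ "k - 1" _ "-2*k"] HO.mul[of F _ 0 _ "k - 1"] HO.mul[of F _ "-k" _ "-k"])
       (use inv ia in \<open>auto intro: HO.cc\<close>)
qed (auto intro: HO.intros)

lemma HO_dY: "HO F e n \<Longrightarrow> HO F (dY e) (n - 1)"
proof (induction rule: HO.induct)
  case (mul a n1 b n2 n)
  show ?case by (simp, intro HO.add HO.mul[of F _ "n1 - 1" _ n2] HO.mul[of F _ n1 _ "n2 - 1"]) (use mul in auto)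
next
  case (inv a k c n)
  have ia: "HO F (EInv a) (-k)" using inv by (intro HO.inv[of F a k c]) auto
  show ?case
    by (simp, intro HO.mul[of F _ "k - 1" _ "-2*k"] HO.mul[of F _ 0 _ "k - 1"] HO.mul[of F _ "-k" _ "-k"])
       (use inv ia in \<open>auto intro: HO.cc\<close>)
qed (auto intro: HO.intros)

lemma jbr2_ge1: "1 \<le> jbr2 x y" unfolding jbr2_def by simp
lemma jbr2_pos: "0 < jbr2 x y" using jbr2_ge1[of x y] by simp
lemma jbr2_mono: assumes "a \<le> b" shows "jbr2 x y powr a \<le> jbr2 x y powr b"
  using powr_mono[OF assms jbr2_ge1] .
lemma jbr2_absx: "\<bar>x\<bar> \<le> jbr2 x y" unfolding jbr2_def by (simp add: real_le_rsqrt)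
lemma jbr2_absy: "\<bar>y\<bar> \<le> jbr2 x y" unfolding jbr2_def by (simp add: real_le_rsqrt)
lemma jbr2_powr1: "jbr2 x y powr 1 = jbr2 x y" using jbr2_pos[of x y] by simp
lemma jbr2_powr_pos: "0 < jbr2 x y powr k" using jbr2_pos[of x y] by simp

lemma HO_bound: assumes fF: "fam F" shows "HO F e n \<Longrightarrow> \<exists>C\<ge>0. \<forall>x y. norm (ev F e x y) \<le> C * jbr2 x y powr n"
proof (induction rule: HO.induct)
  case (c0 n) thus ?case by (intro exI[of _ 0]) auto
next
  case (cc n c)
  have "norm c \<le> norm c * jbr2 x y powr n" for x y
  proof -
    have "1 \<le> jbr2 x y powr n" using jbr2_mono[of 0 n x y] cc jbr2_pos[of x y] by simp
    thus ?thesis by (simp add: mult_le_cancel_left1)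
  qed
  thus ?case by (intro exI[of _ "norm c"]) auto
next
  case (x n)
  have "\<bar>x\<bar> \<le> 1 * jbr2 x y powr n" for x y
    using jbr2_absx[of x y] jbr2_mono[of 1 n x y] x jbr2_powr1[of x y] by simp
  thus ?case by (intro exI[of _ 1]) auto
next
  case (y n)
  have "\<bar>y\<bar> \<le> 1 * jbr2 x y powr n" for x y
    using jbr2_absy[of y x] jbr2_mono[of 1 n x y] y jbr2_powr1[of x y] by simp
  thus ?case by (intro exI[of _ 1]) auto
next
  case (at i j n)
  obtain C where C: "\<And>x y. norm (F i j x y) \<le> C * jbr2 x y powr (0 - real (i + j))"
    using fF unfolding fam_def by blast
  have "norm (F i j x y) \<le> max C 0 * jbr2 x y powr n" for x y
  proof -
    have "norm (F i j x y) \<le> max C 0 * jbr2 x y powr (0 - real (i + j))"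
      using C[of x y] by (smt (verit) mult_right_mono powr_ge_zero)
    also have "\<dots> \<le> max C 0 * jbr2 x y powr n"
      using at(1) by (intro mult_left_mono jbr2_mono) auto
    finally show ?thesis .
  qed
  thus ?case by (intro exI[of _ "max C 0"]) auto
next
  case (add a n b)
  then obtain C1 C2 where "C1 \<ge> 0" "C2 \<ge> 0" "\<And>x y. norm (ev F a x y) \<le> C1 * jbr2 x y powr n"
    "\<And>x y. norm (ev F b x y) \<le> C2 * jbr2 x y powr n" by blast
  thus ?case by (intro exI[of _ "C1 + C2"]) (auto simp: algebra_simps intro!: order.trans[OF norm_triangle_ineq] add_mono)
next
  case (mul a n1 b n2 n)
  then obtain C1 C2 where C: "C1 \<ge> 0" "C2 \<ge> 0" "\<And>x y. norm (ev F a x y) \<le> C1 * jbr2 x y powr n1"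
    "\<And>x y. norm (ev F b x y) \<le> C2 * jbr2 x y powr n2" by blast
  have "norm (ev F (EMul a b) x y) \<le> (C1 * C2) * jbr2 x y powr n" for x y
  proof -
    have "norm (ev F (EMul a b) x y) = norm (ev F a x y) * norm (ev F b x y)" by (simp add: norm_mult)
    also have "\<dots> \<le> (C1 * jbr2 x y powr n1) * (C2 * jbr2 x y powr n2)"
      using C by (intro mult_mono) auto
    also have "\<dots> = (C1 * C2) * jbr2 x y powr (n1 + n2)" by (simp add: powr_add)
    also have "\<dots> \<le> (C1 * C2) * jbr2 x y powr n" using mul C by (intro mult_left_mono jbr2_mono) auto
    finally show ?thesis .
  qed
  thus ?case using C by (intro exI[of _ "C1 * C2"]) auto
next
  case (inv a k c n)
  have "norm (ev F (EInv a) x y) \<le> (1 / c) * jbr2 x y powr n" for x y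
  proof -
    have lb: "c * jbr2 x y powr k \<le> norm (ev F a x y)" using inv by blast
    have pos: "0 < c * jbr2 x y powr k" using inv(2) jbr2_powr_pos by simp
    have pp: "0 < norm (ev F a x y) * (c * jbr2 x y powr k)" using pos lb by (metis mult_pos_pos order_less_le_trans)
    have "norm (ev F (EInv a) x y) = 1 / norm (ev F a x y)" by (simp add: norm_inverse divide_inverse)
    also have "\<dots> \<le> 1 / (c * jbr2 x y powr k)" by (rule divide_left_mono[OF lb]) (use pp in auto)
    also have "\<dots> = (1 / c) * jbr2 x y powr (- k)" by (simp add: powr_minus divide_inverse)
    also have "\<dots> \<le> (1 / c) * jbr2 x y powr n" using inv by (intro mult_left_mono jbr2_mono) auto
    finally show ?thesis .
  qed
  thus ?case using inv(2) by (intro exI[of _ "1 / c"]) auto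
qed

lemma HO_nonzero: "HO F a k \<Longrightarrow> c > 0 \<Longrightarrow> (\<forall>x y. c * jbr2 x y powr k \<le> norm (ev F a x y)) \<Longrightarrow> ev F a x y \<noteq> 0"
proof -
  assume "c > 0" "\<forall>x y. c * jbr2 x y powr k \<le> norm (ev F a x y)"
  moreover have "0 < c * jbr2 x y powr k" using \<open>c > 0\<close> jbr2_powr_pos by simp
  ultimately show ?thesis by (metis norm_zero not_le)
qed

lemma inv_deriv:
  assumes "(f has_vector_derivative f') (at x)" "f x \<noteq> (0::complex)"
  shows "((\<lambda>t. inverse (f t)) has_vector_derivative (-1 * f') * (inverse (f x) * inverse (f x))) (at x)"
proof -
  have "((\<lambda>z. inverse z) has_field_derivative - (inverse (f x) ^ Suc (Suc 0))) (at (f x))"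
    using assms(2) by (rule DERIV_inverse)
  from field_vector_diff_chain_at[OF assms(1) this]
  show ?thesis by (simp add: o_def algebra_simps power2_eq_square)
qed

lemma HO_derivX: assumes fF: "fam F" shows "HO F e n \<Longrightarrow> ((\<lambda>t. ev F e t y) has_vector_derivative ev F (dX e) x y) (at x)"
proof (induction arbitrary: x y rule: HO.induct)
  case (x n)
  show ?case using has_vector_derivative_of_real[OF DERIV_ident] by simp
next
  case (at i j n) thus ?case using fF unfolding fam_def by simp
next
  case (add a n b) thus ?case by (simp add: has_vector_derivative_add)
next
  case (mul a n1 b n2 n)
  from has_vector_derivative_mult[OF mul.IH(1) mul.IH(2)]
  show ?case by (simp add: algebra_simps)
next
  case (inv a k c n)
  have "ev F a x y \<noteq> 0" using HO_nonzero[OF inv(1,2,3)] .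
  from inv_deriv[OF inv.IH this] show ?case by simp
qed auto

lemma HO_derivY: assumes fF: "fam F" shows "HO F e n \<Longrightarrow> ((\<lambda>t. ev F e x t) has_vector_derivative ev F (dY e) x y) (at y)"
proof (induction arbitrary: x y rule: HO.induct)
  case (y n)
  show ?case using has_vector_derivative_of_real[OF DERIV_ident] by simp
next
  case (at i j n) thus ?case using fF unfolding fam_def by simp
next
  case (add a n b) thus ?case by (simp add: has_vector_derivative_add)
next
  case (mul a n1 b n2 n)
  from has_vector_derivative_mult[OF mul.IH(1) mul.IH(2)]
  show ?case by (simp add: algebra_simps)
next
  case (inv a k c n)
  have "ev F a x y \<noteq> 0" using HO_nonzero[OF inv(1,2,3)] .
  from inv_deriv[OF inv.IH this] show ?case by simp
qed auto

lemma comm: "ev F (dX (dY e)) = ev F (dY (dX e))"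
proof (induction e)
  case (EAdd a b) thus ?case by (simp add: fun_eq_iff)
next
  case (EMul a b)
  show ?case using EMul by (simp add: fun_eq_iff algebra_simps)
next
  case (EInv a)
  show ?case using EInv by (simp add: fun_eq_iff algebra_simps)
qed auto

lemma dX_cong:
  assumes fF: "fam F" and u: "HO F u n1" and v: "HO F v n2" and e: "ev F u = ev F v"
  shows "ev F (dX u) = ev F (dX v)"
proof (intro ext)
  fix x y
  have a: "((\<lambda>t. ev F u t y) has_vector_derivative ev F (dX u) x y) (at x)" by (rule HO_derivX[OF fF u])
  have b: "((\<lambda>t. ev F u t y) has_vector_derivative ev F (dX v) x y) (at x)" using HO_derivX[OF fF v] e by simp
  show "ev F (dX u) x y = ev F (dX v) x y" by (rule vector_derivative_unique_at[OF a b])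
qed

lemma HO_iterX: "HO F e n \<Longrightarrow> HO F ((dX^^i) e) (n - real i)"
proof (induction i)
  case 0 thus ?case by simp
next
  case (Suc i)
  have "HO F (dX ((dX^^i) e)) (n - real i - 1)" using HO_dX[OF Suc.IH[OF Suc.prems]] .
  thus ?case by (simp add: algebra_simps)
qed

lemma HO_iterY: "HO F e n \<Longrightarrow> HO F ((dY^^j) e) (n - real j)"
proof (induction j)
  case 0 thus ?case by simp
next
  case (Suc j)
  have "HO F (dY ((dY^^j) e)) (n - real j - 1)" using HO_dY[OF Suc.IH[OF Suc.prems]] .
  thus ?case by (simp add: algebra_simps)
qed

lemma HO_iter: assumes "HO F e n" shows "HO F ((dX^^i) ((dY^^j) e)) (n - real (i + j))"
proof -
  have "HO F ((dY^^j) e) (n - real j)" by (rule HO_iterY[OF assms])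
  from HO_iterX[OF this, of i] show ?thesis by (simp add: algebra_simps)
qed

lemma comm_iter:
  assumes fF: "fam F" and u: "HO F u n"
  shows "ev F (dY ((dX^^i) u)) = ev F ((dX^^i) (dY u))"
proof (induction i)
  case 0 thus ?case by simp
next
  case (Suc i)
  have "ev F (dY ((dX^^Suc i) u)) = ev F (dX (dY ((dX^^i) u)))" by (simp add: comm)
  also have "\<dots> = ev F (dX ((dX^^i) (dY u)))"
    by (rule dX_cong[OF fF HO_dY[OF HO_iterX[OF u]] HO_iterX[OF HO_dY[OF u]] Suc.IH])
  also have "\<dots> = ev F ((dX^^Suc i) (dY u))" by simp
  finally show ?case .
qed

lemma HO_S2:
  assumes fF: "fam F" and e: "HO F e n"
  shows "S2 n (ev F e)"
  unfolding S2_def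
proof (intro exI[of _ "\<lambda>i j. ev F ((dX^^i) ((dY^^j) e))"] conjI allI)
  show "(\<lambda>i j. ev F ((dX^^i) ((dY^^j) e))) 0 0 = ev F e" by simp
next
  fix i j x y
  show "((\<lambda>t. ev F ((dX^^i) ((dY^^j) e)) t y) has_vector_derivative ev F ((dX^^Suc i) ((dY^^j) e)) x y) (at x)"
    using HO_derivX[OF fF HO_iter[OF e, of i j]] by simp
next
  fix i j x y
  have "((\<lambda>t. ev F ((dX^^i) ((dY^^j) e)) x t) has_vector_derivative ev F (dY ((dX^^i) ((dY^^j) e))) x y) (at y)"
    using HO_derivY[OF fF HO_iter[OF e, of i j]] .
  moreover have "ev F (dY ((dX^^i) ((dY^^j) e))) = ev F ((dX^^i) ((dY^^Suc j) e))"
    using comm_iter[OF fF HO_iterY[OF e, of j]] by simp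
  ultimately show "((\<lambda>t. ev F ((dX^^i) ((dY^^j) e)) x t) has_vector_derivative ev F ((dX^^i) ((dY^^Suc j) e)) x y) (at y)"
    by simp
next
  fix i j
  obtain C where "C \<ge> 0" "\<forall>x y. norm (ev F ((dX^^i) ((dY^^j) e)) x y) \<le> C * jbr2 x y powr (n - real (i + j))"
    using HO_bound[OF fF HO_iter[OF e, of i j]] by blast
  thus "\<exists>C. \<forall>x y. norm (ev F ((dX^^i) ((dY^^j) e)) x y) \<le> C * jbr2 x y powr (n - real (i + j))" by blast
qed

primrec ispoly :: "ex \<Rightarrow> bool" where
  "ispoly (EC c) = True" | "ispoly VX = True" | "ispoly VY = True" | "ispoly (EA i j) = False"
| "ispoly (EAdd a b) = (ispoly a \<and> ispoly b)" | "ispoly (EMul a b) = (ispoly a \<and> ispoly b)"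
| "ispoly (EInv a) = False"

primrec pdeg :: "ex \<Rightarrow> nat" where
  "pdeg (EC c) = 0" | "pdeg VX = 1" | "pdeg VY = 1" | "pdeg (EA i j) = 0"
| "pdeg (EAdd a b) = max (pdeg a) (pdeg b)" | "pdeg (EMul a b) = pdeg a + pdeg b"
| "pdeg (EInv a) = 0"

lemma HO_poly: "ispoly e \<Longrightarrow> real (pdeg e) \<le> n \<Longrightarrow> HO F e n"
proof (induction e arbitrary: n)
  case (EC c) thus ?case by (auto intro: HO.cc)
next
  case VX thus ?case by (auto intro: HO.x)
next
  case VY thus ?case by (auto intro: HO.y)
next
  case (EAdd a b) thus ?case by (auto intro: HO.add)
next
  case (EMul a b)
  show ?case by (rule HO.mul[of F a "real (pdeg a)" b "real (pdeg b)"]) (use EMul in auto)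
qed auto

lemma ring_aux1: fixes a b s qa qb ra rb :: complex
  shows "a = s*qa + ra \<Longrightarrow> b = s*qb + rb \<Longrightarrow> a*b = s*(qa*b + ra*qb) + ra*rb"
  by (simp add: algebra_simps)
lemma ring_aux2: fixes a b s qa qb ra rb :: complex
  shows "a = s*qa + ra \<Longrightarrow> b = s*qb + rb \<Longrightarrow> a+b = s*(qa+qb) + (ra+rb)"
  by (simp add: algebra_simps)

lemma div_lin: "HO F e n \<Longrightarrow> ispoly e \<Longrightarrow> \<exists>Q R. HO F Q (n - 1) \<and> HO F R n \<and>
   (\<forall>x y. ev F e x y = of_real (x + y) * ev F Q x y + ev F R x y) \<and> (\<forall>x y. ev F R x y = ev F e x (-x))"
proof (induction rule: HO.induct)
  case (c0 n) thus ?case by (intro exI[of _ "EC 0"]) (auto intro: HO.c0)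
next
  case (cc n c) show ?case by (rule exI[of _ "EC 0"], rule exI[of _ "EC c"]) (use cc in \<open>auto intro: HO.c0 HO.cc\<close>)
next
  case (x n) show ?case by (rule exI[of _ "EC 0"], rule exI[of _ "VX"]) (use x in \<open>auto intro: HO.c0 HO.x\<close>)
next
  case (y n)
  have h1: "HO F (EMul (EC (-1)) VX) n" by (rule HO.mul[of F _ 0 _ 1]) (use y in \<open>auto intro: HO.cc HO.x\<close>)
  have h2: "HO F (EC 1) (n - 1)" using y by (intro HO.cc) auto
  show ?case by (rule exI[of _ "EC 1"], rule exI[of _ "EMul (EC (-1)) VX"], intro conjI allI h1 h2) (simp_all add: algebra_simps)
next
  case (add a n b)
  have pa: "ispoly a" and pb: "ispoly b" using add.prems by auto
  obtain Qa Ra where A: "HO F Qa (n - 1)" "HO F Ra n" "\<forall>x y. ev F a x y = of_real (x + y) * ev F Qa x y + ev F Ra x y"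
    "\<forall>x y. ev F Ra x y = ev F a x (-x)" using add.IH(1)[OF pa] by blast
  obtain Qb Rb where B: "HO F Qb (n - 1)" "HO F Rb n" "\<forall>x y. ev F b x y = of_real (x + y) * ev F Qb x y + ev F Rb x y"
    "\<forall>x y. ev F Rb x y = ev F b x (-x)" using add.IH(2)[OF pb] by blast
  show ?case
  proof (rule exI[of _ "EAdd Qa Qb"], rule exI[of _ "EAdd Ra Rb"], intro conjI allI)
    show "HO F (EAdd Qa Qb) (n - 1)" using A(1,2) B(1,2) by (intro HO.add) auto
    show "HO F (EAdd Ra Rb) n" using A(1,2) B(1,2) by (intro HO.add) auto
    fix x y
    show "ev F (EAdd a b) x y = of_real (x + y) * ev F (EAdd Qa Qb) x y + ev F (EAdd Ra Rb) x y"
      using ring_aux2[OF A(3)[rule_format, of x y] B(3)[rule_format, of x y]] by simp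
    show "ev F (EAdd Ra Rb) x y = ev F (EAdd a b) x (- x)" using A(4) B(4) by simp
  qed
next
  case (mul a n1 b n2 n)
  have pa: "ispoly a" and pb: "ispoly b" using mul.prems by auto
  obtain Qa Ra where A: "HO F Qa (n1 - 1)" "HO F Ra n1" "\<forall>x y. ev F a x y = of_real (x + y) * ev F Qa x y + ev F Ra x y"
    "\<forall>x y. ev F Ra x y = ev F a x (-x)" using mul.IH(1)[OF pa] by blast
  obtain Qb Rb where B: "HO F Qb (n2 - 1)" "HO F Rb n2" "\<forall>x y. ev F b x y = of_real (x + y) * ev F Qb x y + ev F Rb x y"
    "\<forall>x y. ev F Rb x y = ev F b x (-x)" using mul.IH(2)[OF pb] by blast
  have hq: "HO F (EAdd (EMul Qa b) (EMul Ra Qb)) (n - 1)"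
    by (intro HO.add HO.mul[of F Qa "n1 - 1" b n2] HO.mul[of F Ra n1 Qb "n2 - 1"]) (use mul.hyps A(1,2) B(1,2) in auto)
  have hr: "HO F (EMul Ra Rb) n" by (rule HO.mul[of F Ra n1 Rb n2]) (use mul.hyps A(1,2) B(1,2) in auto)
  show ?case
  proof (rule exI[of _ "EAdd (EMul Qa b) (EMul Ra Qb)"], rule exI[of _ "EMul Ra Rb"], intro conjI allI hq hr)
    fix x y
    show "ev F (EMul a b) x y = of_real (x + y) * ev F (EAdd (EMul Qa b) (EMul Ra Qb)) x y + ev F (EMul Ra Rb) x y"
      using ring_aux1[OF A(3)[rule_format, of x y] B(3)[rule_format, of x y]] by simp
    show "ev F (EMul Ra Rb) x y = ev F (EMul a b) x (- x)" using A(4) B(4) by simp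
  qed
qed auto

lemma pow_split: fixes a :: real assumes "0 \<le> a" shows "(1 + a)^k \<le> 2^k * (1 + a^k)"
proof (cases "a \<le> 1")
  case True
  have "(1 + a)^k \<le> 2^k" using True assms by (intro power_mono) auto
  also have "\<dots> \<le> 2^k * (1 + a^k)" using assms by simp
  finally show ?thesis .
next
  case False
  have "(1 + a)^k \<le> (2 * a)^k" using False by (intro power_mono) auto
  also have "\<dots> = 2^k * a^k" by (simp add: power_mult_distrib)
  also have "\<dots> \<le> 2^k * (1 + a^k)" by simp
  finally show ?thesis .
qed

lemma abs_le_sq: fixes y :: real shows "\<bar>y\<bar> \<le> 1 + y^2"
proof -
  have "0 \<le> (\<bar>y\<bar> - 1/2)^2" by simp
  hence "0 \<le> \<bar>y\<bar> * \<bar>y\<bar> - \<bar>y\<bar> + 1/4" by (simp add: power2_eq_square algebra_simps)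
  thus ?thesis by (simp add: power2_eq_square abs_mult_self_eq)
qed

lemma div_aux: fixes a b c k :: real shows "c \<noteq> 0 \<Longrightarrow> a * c / b / (k * c) = a / k / b"
  by (cases "b = 0"; cases "k = 0") (simp_all add: field_simps)

lemma Dm_lb: fixes x y :: real assumes m: "0 < m" shows "min (2*m) (3*m^2) * (1 + y^2) \<le> \<bar>Dm m x y\<bar>"
proof -
  have e: "\<bar>Dm m x y\<bar> = 2*m*(x^2+y^2) + 2*m*(x+y)^2 + 3*m^2"
    using Dm_pos[OF m, of x y] unfolding Dm_def by (simp add: power2_eq_square algebra_simps)
  have a: "0 \<le> 2*m*(x+y)^2" "0 \<le> 2*m*x^2" using m by auto
  have b: "min (2*m) (3*m^2) * y^2 \<le> 2*m*y^2" by (intro mult_right_mono) auto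
  have c: "min (2*m) (3*m^2) \<le> 3*m^2" by simp
  show ?thesis unfolding e using a b c by (simp add: algebra_simps)
qed

lemma errA:
  assumes m: "0 < m" and y: "y \<noteq> 0" and l1: "length r1 \<le> Suc k" and l0: "length r0 \<le> Suc k"
  shows "norm ((hp r1 (of_real x) * of_real y + hp r0 (of_real x)) / of_real (Dm m x y))
     \<le> (sum_list (map norm r1) + sum_list (map norm r0)) * 2^k / min (2*m) (3*m^2) * (1 + \<bar>x\<bar>^k) / \<bar>y\<bar>"
proof -
  define S1 where "S1 = sum_list (map norm r1)"
  define S0 where "S0 = sum_list (map norm r0)"
  define P where "P = (1 + \<bar>x\<bar>)^k"
  define \<kappa> where "\<kappa> = min (2*m) (3*m^2)"
  have kp: "0 < \<kappa>" using m unfolding \<kappa>_def by simp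
  have S1p: "0 \<le> S1" unfolding S1_def by (induction r1) auto
  have S0p: "0 \<le> S0" unfolding S0_def by (induction r0) auto
  have Pp: "0 \<le> P" unfolding P_def by simp
  have ypos: "0 < \<bar>y\<bar>" using y by simp
  have pw: "(1 + \<bar>x\<bar>)^j \<le> P" if "j \<le> k" for j
    unfolding P_def using that by (intro power_increasing) auto
  have h1: "norm (hp r1 (of_real x)) \<le> S1 * P"
    using hp_bound[of r1 x] mult_left_mono[OF pw[of "length r1 - 1"] S1p] l1 unfolding S1_def by linarith
  have h0: "norm (hp r0 (of_real x)) \<le> S0 * P"
    using hp_bound[of r0 x] mult_left_mono[OF pw[of "length r0 - 1"] S0p] l0 unfolding S0_def by linarith
  define num where "num = norm (hp r1 (of_real x) * of_real y + hp r0 (of_real x))"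
  have n1: "num \<le> S1 * P * \<bar>y\<bar> + S0 * P"
  proof -
    have "num \<le> norm (hp r1 (of_real x)) * \<bar>y\<bar> + norm (hp r0 (of_real x))"
      unfolding num_def by (metis norm_mult norm_of_real norm_triangle_ineq)
    also have "\<dots> \<le> S1 * P * \<bar>y\<bar> + S0 * P" using h1 h0 by (intro add_mono mult_right_mono) auto
    finally show ?thesis .
  qed
  have n2: "num * \<bar>y\<bar> \<le> (S1 + S0) * P * (1 + y^2)"
  proof -
    have "num * \<bar>y\<bar> \<le> (S1 * P * \<bar>y\<bar> + S0 * P) * \<bar>y\<bar>" using n1 by (intro mult_right_mono) auto
    also have "\<dots> = S1 * P * y^2 + S0 * P * \<bar>y\<bar>" by (simp add: algebra_simps power2_eq_square abs_mult_self_eq)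
    also have "\<dots> \<le> S1 * P * (1 + y^2) + S0 * P * (1 + y^2)"
      using S1p S0p Pp abs_le_sq[of y] by (intro add_mono mult_left_mono) auto
    also have "\<dots> = (S1 + S0) * P * (1 + y^2)" by (simp add: algebra_simps)
    finally show ?thesis .
  qed
  have D: "\<kappa> * (1 + y^2) \<le> \<bar>Dm m x y\<bar>" unfolding \<kappa>_def by (rule Dm_lb[OF m])
  have Dp: "0 < \<kappa> * (1 + y^2)" using kp by (simp add: add_pos_nonneg)
  have P2: "P \<le> 2^k * (1 + \<bar>x\<bar>^k)" unfolding P_def by (rule pow_split) simp
  have "norm ((hp r1 (of_real x) * of_real y + hp r0 (of_real x)) / of_real (Dm m x y)) = num / \<bar>Dm m x y\<bar>"
    unfolding num_def by (simp add: norm_divide)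
  also have "\<dots> \<le> num / (\<kappa> * (1 + y^2))"
    using D Dp by (intro divide_left_mono) (auto simp: num_def)
  also have "\<dots> \<le> (S1 + S0) * P / \<kappa> / \<bar>y\<bar>"
  proof -
    have "num \<le> (S1 + S0) * P * (1 + y^2) / \<bar>y\<bar>" using n2 ypos by (simp add: pos_le_divide_eq)
    hence "num / (\<kappa> * (1 + y^2)) \<le> (S1 + S0) * P * (1 + y^2) / \<bar>y\<bar> / (\<kappa> * (1 + y^2))"
      using Dp by (intro divide_right_mono) auto
    also have "\<dots> = (S1 + S0) * P / \<kappa> / \<bar>y\<bar>" using Dp by (intro div_aux) auto
    finally show ?thesis .
  qed
  also have "\<dots> \<le> (S1 + S0) * (2^k * (1 + \<bar>x\<bar>^k)) / \<kappa> / \<bar>y\<bar>"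
    using P2 S1p S0p kp ypos by (intro divide_right_mono mult_left_mono) auto
  also have "\<dots> = (S1 + S0) * 2^k / \<kappa> * (1 + \<bar>x\<bar>^k) / \<bar>y\<bar>" by (simp add: algebra_simps)
  finally show ?thesis unfolding S1_def S0_def \<kappa>_def .
qed

lemma gen_div1: fixes N D a0 a1 r1 r0 Y A :: complex
  shows "D \<noteq> 0 \<Longrightarrow> N = (a0 * Y + a1) * D + r1 * Y + r0 \<Longrightarrow> A = N / D \<Longrightarrow> A - a0 * Y - a1 = (r1 * Y + r0) / D"
  by (simp add: field_simps)
lemma gen_div2: fixes N D b0 b1 r1 r0 Y A :: complex
  assumes D: "D \<noteq> 0" and Y: "Y \<noteq> 0" and h: "N * Y = (b0 * Y + b1) * D + r1 * Y + r0" and hA: "A = N / D"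
  shows "A - b0 - b1 / Y = (r1 * Y + r0) / D / Y"
proof -
  have N: "N = ((b0 * Y + b1) * D + r1 * Y + r0) / Y" using h Y by (simp add: eq_divide_eq)
  show ?thesis unfolding hA N using D Y by (simp add: field_simps)
qed

lemma exp_a:
  fixes al0 al1 ga0 ga1 ga2 ga3 ga4 :: complex
  assumes m: "0 < m"
    and q00: "\<forall>x y. q00 x y = al0 + al1 * (\<i> * of_real (x + y))"
    and q11: "\<forall>x y. q11 x y = ga0 + ga1 * (\<i> * of_real (x + y)) + ga2 * of_real (x * y) + ga3 * of_real (x^2 + y^2) + ga4 * (\<i> * of_real (x^2 * y + x * y^2))"
  shows "\<exists>f0 f1 K. S1 2 f0 \<and> S1 3 f1 \<and>
     (\<forall>x y. y \<noteq> 0 \<longrightarrow> norm (asol m q00 q11 x y - f0 x * of_real y - f1 x) \<le> K * (1 + \<bar>x\<bar>^4) / \<bar>y\<bar>)"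
proof -
  define M where "M = complex_of_real m"
  define iM where "iM = inverse M"
  have Mn: "M \<noteq> 0" using m unfolding M_def by simp
  define q1 where "q1 = [(- (1/2 * \<i> * al1)), ((1/2 * iM * ga3)), ((1/2 * iM * \<i> * ga4) - (1/2 * iM * \<i> * al1))]"
  define q0 where "q0 = [(- (1/4 * ga3) - (1/2 * al0)), (- (1/4 * \<i> * ga4) + (1/2 * iM * \<i> * ga1)), (- (1/2 * iM * ga3) + (1/2 * iM * ga2) - (1/2 * iM * al0))]"
  define r1 where "r1 = [((M * \<i> * ga1) + (1/2 * M^2 * \<i> * al1)), (- (2 * ga0) + (1/2 * M * ga3) + (M * ga2) - (2 * M * al0)), ((3/2 * M * \<i> * ga4) - (3/2 * M * \<i> * al1)), (- (2 * ga3) + (2 * ga2) - (2 * al0)), ((2 * \<i> * ga4) - (2 * \<i> * al1))]"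
  define r0 where "r0 = [((M * ga0) - (3/4 * M^2 * ga3) + (1/2 * M^2 * al0)), ((5/2 * M * \<i> * ga1) - (3/4 * M^2 * \<i> * ga4) + (2 * M^2 * \<i> * al1)), (- (3/2 * M * ga3) + (3/2 * M * ga2) - (3/2 * M * al0)), ((2 * \<i> * ga1) - (M * \<i> * ga4) + (2 * M * \<i> * al1)), (- (2 * ga3) + (2 * ga2) - (2 * al0))]"
  define f0 where "f0 = (\<lambda>t::real. hp q1 (of_real t))"
  define f1 where "f1 = (\<lambda>t::real. hp q0 (of_real t))"
  have S0: "S1 2 f0" unfolding f0_def q1_def by (rule S1_hp3) simp
  have S1': "S1 3 f1" unfolding f1_def q0_def by (rule S1_hp3) simp
  have key: "asol m q00 q11 x y - f0 x * of_real y - f1 x = (hp r1 (of_real x) * (of_real y) + hp r0 (of_real x)) / of_real (Dm m x y)" for x y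
  proof -
    have EqD: "(of_real (Dm m x y) :: complex) = (- (4 * M * ((of_real x)^2 + (of_real x) * (of_real y) + (of_real y)^2) + 3 * M^2))" by (simp add: Dm_def M_def)
    have qa: "q00 x y = al0 + al1 * (\<i> * (of_real x + of_real y))" using q00 by simp
    have qb: "q11 x y = ga0 + ga1 * (\<i> * (of_real x + of_real y)) + ga2 * (of_real x * of_real y) + ga3 * ((of_real x)^2 + (of_real y)^2) + ga4 * (\<i> * ((of_real x)^2 * of_real y + of_real x * (of_real y)^2))" using q11 by simp
    have EqN: "(2 * of_real ((x^2+m)*(y^2+m)) * q00 x y - of_real (2*x*y-m) * q11 x y) = (2 * (((of_real x)^2 + M) * ((of_real y)^2 + M)) * (al0 + al1 * (\<i> * ((of_real x) + (of_real y)))) - (2 * (of_real x) * (of_real y) - M) * (ga0 + ga1 * (\<i> * ((of_real x) + (of_real y))) + ga2 * ((of_real x) * (of_real y)) + ga3 * ((of_real x)^2 + (of_real y)^2) + ga4 * (\<i> * ((of_real x)^2 * (of_real y) + (of_real x) * (of_real y)^2))))" unfolding qa qb M_def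
      by (simp only: of_real_mult of_real_add of_real_diff of_real_power of_real_numeral of_real_minus)
    have AN: "asol m q00 q11 x y = (2 * (((of_real x)^2 + M) * ((of_real y)^2 + M)) * (al0 + al1 * (\<i> * ((of_real x) + (of_real y)))) - (2 * (of_real x) * (of_real y) - M) * (ga0 + ga1 * (\<i> * ((of_real x) + (of_real y))) + ga2 * ((of_real x) * (of_real y)) + ga3 * ((of_real x)^2 + (of_real y)^2) + ga4 * (\<i> * ((of_real x)^2 * (of_real y) + (of_real x) * (of_real y)^2)))) / of_real (Dm m x y)" unfolding asol_def EqN ..
    have I: "(2 * (((of_real x)^2 + M) * ((of_real y)^2 + M)) * (al0 + al1 * (\<i> * ((of_real x) + (of_real y)))) - (2 * (of_real x) * (of_real y) - M) * (ga0 + ga1 * (\<i> * ((of_real x) + (of_real y))) + ga2 * ((of_real x) * (of_real y)) + ga3 * ((of_real x)^2 + (of_real y)^2) + ga4 * (\<i> * ((of_real x)^2 * (of_real y) + (of_real x) * (of_real y)^2)))) = (hp q1 (of_real x) * (of_real y) + hp q0 (of_real x)) * of_real (Dm m x y) + hp r1 (of_real x) * (of_real y) + hp r0 (of_real x)"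
      unfolding EqD q1_def q0_def r1_def r0_def by (rule id_a[OF Mn iM_def])
    show ?thesis unfolding f0_def f1_def by (rule gen_div1[OF Dn[OF m] I AN])
  qed
  have l1: "length r1 \<le> Suc 4" unfolding r1_def by simp
  have l0: "length r0 \<le> Suc 4" unfolding r0_def by simp
  let ?K = "(sum_list (map norm r1) + sum_list (map norm r0)) * 2^4 / min (2*m) (3*m^2)"
  have "norm (asol m q00 q11 x y - f0 x * of_real y - f1 x) \<le> ?K * (1 + \<bar>x\<bar>^4) / \<bar>y\<bar>" if y: "y \<noteq> 0" for x y
    unfolding key by (rule errA[OF m y l1 l0])
  thus ?thesis using S0 S1' by blast
qed

lemma exp_b:
  fixes al0 al1 ga0 ga1 ga2 ga3 ga4 :: complex
  assumes m: "0 < m"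
    and q00: "\<forall>x y. q00 x y = al0 + al1 * (\<i> * of_real (x + y))"
    and q11: "\<forall>x y. q11 x y = ga0 + ga1 * (\<i> * of_real (x + y)) + ga2 * of_real (x * y) + ga3 * of_real (x^2 + y^2) + ga4 * (\<i> * of_real (x^2 * y + x * y^2))"
  shows "\<exists>f0 f1 K. S1 1 f0 \<and> S1 2 f1 \<and>
     (\<forall>x y. y \<noteq> 0 \<longrightarrow> norm (bsol m q00 q11 x y - f0 x - f1 x / of_real y) \<le> K * (1 + \<bar>x\<bar>^3) / y^2)"
proof -
  define M where "M = complex_of_real m"
  define iM where "iM = inverse M"
  have Mn: "M \<noteq> 0" using m unfolding M_def by simp
  define q1 where "q1 = [(- (1/2 * iM * ga3)), (- (1/2 * iM * \<i> * ga4) + (1/2 * iM * \<i> * al1))]"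
  define q0 where "q0 = [(- (1/4 * \<i> * al1) - (1/2 * iM * \<i> * ga1)), ((1/2 * iM * ga3) - (1/2 * iM * ga2) + (1/2 * iM * al0))]"
  define r1 where "r1 = [((2 * ga0) - (3/2 * M * ga3) + (M * al0)), (- (3/2 * M * \<i> * ga4) + (3/2 * M * \<i> * al1)), ((2 * ga3) - (2 * ga2) + (2 * al0)), (- (2 * \<i> * ga4) + (2 * \<i> * al1))]"
  define r0 where "r0 = [(- (3/2 * M * \<i> * ga1) - (3/4 * M^2 * \<i> * al1)), ((3/2 * M * ga3) - (3/2 * M * ga2) + (3/2 * M * al0)), (- (2 * \<i> * ga1) - (M * \<i> * al1)), ((2 * ga3) - (2 * ga2) + (2 * al0))]"
  define f0 where "f0 = (\<lambda>t::real. hp q1 (of_real t))"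
  define f1 where "f1 = (\<lambda>t::real. hp q0 (of_real t))"
  have S0: "S1 1 f0" unfolding f0_def q1_def by (rule S1_hp2) simp
  have S1': "S1 2 f1" unfolding f1_def q0_def by (rule S1_hp2) simp
  have key: "bsol m q00 q11 x y - f0 x - f1 x / of_real y = (hp r1 (of_real x) * (of_real y) + hp r0 (of_real x)) / of_real (Dm m x y) / of_real y" if y: "y \<noteq> 0" for x y
  proof -
    have EqD: "(of_real (Dm m x y) :: complex) = (- (4 * M * ((of_real x)^2 + (of_real x) * (of_real y) + (of_real y)^2) + 3 * M^2))" by (simp add: Dm_def M_def)
    have qa: "q00 x y = al0 + al1 * (\<i> * (of_real x + of_real y))" using q00 by simp
    have qb: "q11 x y = ga0 + ga1 * (\<i> * (of_real x + of_real y)) + ga2 * (of_real x * of_real y) + ga3 * ((of_real x)^2 + (of_real y)^2) + ga4 * (\<i> * ((of_real x)^2 * of_real y + of_real x * (of_real y)^2))" using q11 by simp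
    have EqN: "(2 * q11 x y - of_real (2*x*y-m) * q00 x y) = (2 * (ga0 + ga1 * (\<i> * ((of_real x) + (of_real y))) + ga2 * ((of_real x) * (of_real y)) + ga3 * ((of_real x)^2 + (of_real y)^2) + ga4 * (\<i> * ((of_real x)^2 * (of_real y) + (of_real x) * (of_real y)^2))) - (2 * (of_real x) * (of_real y) - M) * (al0 + al1 * (\<i> * ((of_real x) + (of_real y)))))" unfolding qa qb M_def
      by (simp only: of_real_mult of_real_add of_real_diff of_real_power of_real_numeral of_real_minus)
    have AN: "bsol m q00 q11 x y = (2 * (ga0 + ga1 * (\<i> * ((of_real x) + (of_real y))) + ga2 * ((of_real x) * (of_real y)) + ga3 * ((of_real x)^2 + (of_real y)^2) + ga4 * (\<i> * ((of_real x)^2 * (of_real y) + (of_real x) * (of_real y)^2))) - (2 * (of_real x) * (of_real y) - M) * (al0 + al1 * (\<i> * ((of_real x) + (of_real y))))) / of_real (Dm m x y)" unfolding bsol_def EqN ..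
    have I: "(2 * (ga0 + ga1 * (\<i> * ((of_real x) + (of_real y))) + ga2 * ((of_real x) * (of_real y)) + ga3 * ((of_real x)^2 + (of_real y)^2) + ga4 * (\<i> * ((of_real x)^2 * (of_real y) + (of_real x) * (of_real y)^2))) - (2 * (of_real x) * (of_real y) - M) * (al0 + al1 * (\<i> * ((of_real x) + (of_real y))))) * (of_real y) = (hp q1 (of_real x) * (of_real y) + hp q0 (of_real x)) * of_real (Dm m x y) + hp r1 (of_real x) * (of_real y) + hp r0 (of_real x)"
      unfolding EqD q1_def q0_def r1_def r0_def by (rule id_b[OF Mn iM_def])
    have Yn: "(of_real y :: complex) \<noteq> 0" using y by simp
    show ?thesis unfolding f0_def f1_def by (rule gen_div2[OF Dn[OF m] Yn I AN])
  qed
  have l1: "length r1 \<le> Suc 3" unfolding r1_def by simp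
  have l0: "length r0 \<le> Suc 3" unfolding r0_def by simp
  let ?K = "(sum_list (map norm r1) + sum_list (map norm r0)) * 2^3 / min (2*m) (3*m^2)"
  have "norm (bsol m q00 q11 x y - f0 x - f1 x / of_real y) \<le> ?K * (1 + \<bar>x\<bar>^3) / y^2" if y: "y \<noteq> 0" for x y
  proof -
    have "norm (bsol m q00 q11 x y - f0 x - f1 x / of_real y) = norm ((hp r1 (of_real x) * (of_real y) + hp r0 (of_real x)) / of_real (Dm m x y)) / \<bar>y\<bar>"
      unfolding key[OF y] by (simp add: norm_divide norm_mult)
    also have "\<dots> \<le> ?K * (1 + \<bar>x\<bar>^3) / \<bar>y\<bar> / \<bar>y\<bar>"
      using errA[OF m y l1 l0, of x] by (intro divide_right_mono) auto
    also have "\<dots> = ?K * (1 + \<bar>x\<bar>^3) / y^2" by (simp add: power2_eq_square abs_mult_self_eq)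
    finally show ?thesis .
  qed
  thus ?thesis using S0 S1' by blast
qed

lemma exp_c1:
  fixes be0 be1 be2 be3 be4 :: complex
  assumes m: "0 < m"
    and q01: "\<forall>x y. q01 x y = be0 + be1 * (\<i> * of_real x) + be2 * (\<i> * of_real y) + be3 * of_real (x * y) + be4 * of_real (y^2)"
  shows "\<exists>f0 f1 K. S1 1 f0 \<and> S1 2 f1 \<and>
     (\<forall>x y. y \<noteq> 0 \<longrightarrow> norm (csol m q01 x y - f0 x * of_real y - f1 x) \<le> K * (1 + \<bar>x\<bar>^3) / \<bar>y\<bar>)"
proof -
  define M where "M = complex_of_real m"
  define iM where "iM = inverse M"
  have Mn: "M \<noteq> 0" using m unfolding M_def by simp
  define q1 where "q1 = [((1/2 * iM * \<i> * be1)), ((1/2 * iM * be4) + (1/2 * iM * be3))]"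
  define q0 where "q0 = [(- (1/4 * be4) + (1/2 * iM * be0)), ((iM * \<i> * be2) - (1/2 * iM * \<i> * be1))]"
  define r1 where "r1 = [((M * \<i> * be2) - (1/2 * M * \<i> * be1)), ((1/2 * M * be4) + (1/2 * M * be3)), ((4 * \<i> * be2) - (2 * \<i> * be1)), ((2 * be4) + (2 * be3))]"
  define r0 where "r0 = [((1/2 * M * be0) - (3/4 * M^2 * be4)), ((M * \<i> * be2) - (1/2 * M * \<i> * be1)), ((2 * be0) - (3 * M * be4)), ((4 * \<i> * be2) - (2 * \<i> * be1))]"
  define f0 where "f0 = (\<lambda>t::real. hp q1 (of_real t))"
  define f1 where "f1 = (\<lambda>t::real. hp q0 (of_real t))"
  have S0: "S1 1 f0" unfolding f0_def q1_def by (rule S1_hp2) simp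
  have S1': "S1 2 f1" unfolding f1_def q0_def by (rule S1_hp2) simp
  have key: "csol m q01 x y - f0 x * of_real y - f1 x = (hp r1 (of_real x) * (of_real y) + hp r0 (of_real x)) / of_real (Dm m x y)" for x y
  proof -
    have EqD: "(of_real (Dm m x y) :: complex) = (- (4 * M * ((of_real x)^2 + (of_real x) * (of_real y) + (of_real y)^2) + 3 * M^2))" by (simp add: Dm_def M_def)
    have qa: "q01 x y = be0 + be1 * (\<i> * of_real x) + be2 * (\<i> * of_real y) + be3 * (of_real x * of_real y) + be4 * (of_real y)^2" using q01 by simp
    have qb: "q01 y x = be0 + be1 * (\<i> * of_real y) + be2 * (\<i> * of_real x) + be3 * (of_real y * of_real x) + be4 * (of_real x)^2" using q01 by simp
    have EqN: "(- of_real (2*x*y-m) * q01 x y - 2 * of_real (y^2+m) * q01 y x) = (- (2 * (of_real x) * (of_real y) - M) * (be0 + be1 * (\<i> * (of_real x)) + be2 * (\<i> * (of_real y)) + be3 * ((of_real x) * (of_real y)) + be4 * (of_real y)^2) - 2 * ((of_real y)^2 + M) * (be0 + be1 * (\<i> * (of_real y)) + be2 * (\<i> * (of_real x)) + be3 * ((of_real y) * (of_real x)) + be4 * (of_real x)^2))" unfolding qa qb M_def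
      by (simp only: of_real_mult of_real_add of_real_diff of_real_power of_real_numeral of_real_minus)
    have AN: "csol m q01 x y = (- (2 * (of_real x) * (of_real y) - M) * (be0 + be1 * (\<i> * (of_real x)) + be2 * (\<i> * (of_real y)) + be3 * ((of_real x) * (of_real y)) + be4 * (of_real y)^2) - 2 * ((of_real y)^2 + M) * (be0 + be1 * (\<i> * (of_real y)) + be2 * (\<i> * (of_real x)) + be3 * ((of_real y) * (of_real x)) + be4 * (of_real x)^2)) / of_real (Dm m x y)" unfolding csol_def EqN ..
    have I: "(- (2 * (of_real x) * (of_real y) - M) * (be0 + be1 * (\<i> * (of_real x)) + be2 * (\<i> * (of_real y)) + be3 * ((of_real x) * (of_real y)) + be4 * (of_real y)^2) - 2 * ((of_real y)^2 + M) * (be0 + be1 * (\<i> * (of_real y)) + be2 * (\<i> * (of_real x)) + be3 * ((of_real y) * (of_real x)) + be4 * (of_real x)^2)) = (hp q1 (of_real x) * (of_real y) + hp q0 (of_real x)) * of_real (Dm m x y) + hp r1 (of_real x) * (of_real y) + hp r0 (of_real x)"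
      unfolding EqD q1_def q0_def r1_def r0_def by (rule id_c1[OF Mn iM_def])
    show ?thesis unfolding f0_def f1_def by (rule gen_div1[OF Dn[OF m] I AN])
  qed
  have l1: "length r1 \<le> Suc 3" unfolding r1_def by simp
  have l0: "length r0 \<le> Suc 3" unfolding r0_def by simp
  let ?K = "(sum_list (map norm r1) + sum_list (map norm r0)) * 2^3 / min (2*m) (3*m^2)"
  have "norm (csol m q01 x y - f0 x * of_real y - f1 x) \<le> ?K * (1 + \<bar>x\<bar>^3) / \<bar>y\<bar>" if y: "y \<noteq> 0" for x y
    unfolding key by (rule errA[OF m y l1 l0])
  thus ?thesis using S0 S1' by blast
qed

lemma exp_c2:
  fixes be0 be1 be2 be3 be4 :: complex
  assumes m: "0 < m"
    and q01: "\<forall>x y. q01 x y = be0 + be1 * (\<i> * of_real x) + be2 * (\<i> * of_real y) + be3 * of_real (x * y) + be4 * of_real (y^2)"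
  shows "\<exists>f0 f1 K. S1 2 f0 \<and> S1 3 f1 \<and>
     (\<forall>x y. x \<noteq> 0 \<longrightarrow> norm (csol m q01 x y - f0 y - f1 y / of_real x) \<le> K * (1 + \<bar>y\<bar>^4) / x^2)"
proof -
  define M where "M = complex_of_real m"
  define iM where "iM = inverse M"
  have Mn: "M \<noteq> 0" using m unfolding M_def by simp
  define q1 where "q1 = [((1/2 * be4)), ((1/2 * iM * \<i> * be1)), ((1/2 * iM * be4) + (1/2 * iM * be3))]"
  define q0 where "q0 = [((1/2 * \<i> * be2) - (1/4 * \<i> * be1)), (- (1/2 * be4) + (1/4 * be3) + (1/2 * iM * be0)), ((iM * \<i> * be2) - (1/2 * iM * \<i> * be1))]"
  define r1 where "r1 = [(- (M * be0) + (3/2 * M^2 * be4)), ((3 * M * \<i> * be2) - (3/2 * M * \<i> * be1)), ((5/2 * M * be4) + (5/2 * M * be3)), ((4 * \<i> * be2) - (2 * \<i> * be1)), ((2 * be4) + (2 * be3))]"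
  define r0 where "r0 = [((3/2 * M^2 * \<i> * be2) - (3/4 * M^2 * \<i> * be1)), ((3/2 * M * be0) - (3/2 * M^2 * be4) + (3/4 * M^2 * be3)), ((5 * M * \<i> * be2) - (5/2 * M * \<i> * be1)), ((2 * be0) - (2 * M * be4) + (M * be3)), ((4 * \<i> * be2) - (2 * \<i> * be1))]"
  define f0 where "f0 = (\<lambda>t::real. hp q1 (of_real t))"
  define f1 where "f1 = (\<lambda>t::real. hp q0 (of_real t))"
  have S0: "S1 2 f0" unfolding f0_def q1_def by (rule S1_hp3) simp
  have S1': "S1 3 f1" unfolding f1_def q0_def by (rule S1_hp3) simp
  have key: "csol m q01 x y - f0 y - f1 y / of_real x = (hp r1 (of_real y) * (of_real x) + hp r0 (of_real y)) / of_real (Dm m x y) / of_real x" if x: "x \<noteq> 0" for x y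
  proof -
    have EqD: "(of_real (Dm m x y) :: complex) = (- (4 * M * ((of_real x)^2 + (of_real x) * (of_real y) + (of_real y)^2) + 3 * M^2))" by (simp add: Dm_def M_def)
    have qa: "q01 x y = be0 + be1 * (\<i> * of_real x) + be2 * (\<i> * of_real y) + be3 * (of_real x * of_real y) + be4 * (of_real y)^2" using q01 by simp
    have qb: "q01 y x = be0 + be1 * (\<i> * of_real y) + be2 * (\<i> * of_real x) + be3 * (of_real y * of_real x) + be4 * (of_real x)^2" using q01 by simp
    have EqN: "(- of_real (2*x*y-m) * q01 x y - 2 * of_real (y^2+m) * q01 y x) = (- (2 * (of_real x) * (of_real y) - M) * (be0 + be1 * (\<i> * (of_real x)) + be2 * (\<i> * (of_real y)) + be3 * ((of_real x) * (of_real y)) + be4 * (of_real y)^2) - 2 * ((of_real y)^2 + M) * (be0 + be1 * (\<i> * (of_real y)) + be2 * (\<i> * (of_real x)) + be3 * ((of_real y) * (of_real x)) + be4 * (of_real x)^2))" unfolding qa qb M_def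
      by (simp only: of_real_mult of_real_add of_real_diff of_real_power of_real_numeral of_real_minus)
    have AN: "csol m q01 x y = (- (2 * (of_real x) * (of_real y) - M) * (be0 + be1 * (\<i> * (of_real x)) + be2 * (\<i> * (of_real y)) + be3 * ((of_real x) * (of_real y)) + be4 * (of_real y)^2) - 2 * ((of_real y)^2 + M) * (be0 + be1 * (\<i> * (of_real y)) + be2 * (\<i> * (of_real x)) + be3 * ((of_real y) * (of_real x)) + be4 * (of_real x)^2)) / of_real (Dm m x y)" unfolding csol_def EqN ..
    have I: "(- (2 * (of_real x) * (of_real y) - M) * (be0 + be1 * (\<i> * (of_real x)) + be2 * (\<i> * (of_real y)) + be3 * ((of_real x) * (of_real y)) + be4 * (of_real y)^2) - 2 * ((of_real y)^2 + M) * (be0 + be1 * (\<i> * (of_real y)) + be2 * (\<i> * (of_real x)) + be3 * ((of_real y) * (of_real x)) + be4 * (of_real x)^2)) * (of_real x) = (hp q1 (of_real y) * (of_real x) + hp q0 (of_real y)) * of_real (Dm m x y) + hp r1 (of_real y) * (of_real x) + hp r0 (of_real y)"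
      unfolding EqD q1_def q0_def r1_def r0_def by (rule id_c2[OF Mn iM_def])
    have Yn: "(of_real x :: complex) \<noteq> 0" using x by simp
    show ?thesis unfolding f0_def f1_def by (rule gen_div2[OF Dn[OF m] Yn I AN])
  qed
  have l1: "length r1 \<le> Suc 4" unfolding r1_def by simp
  have l0: "length r0 \<le> Suc 4" unfolding r0_def by simp
  let ?K = "(sum_list (map norm r1) + sum_list (map norm r0)) * 2^4 / min (2*m) (3*m^2)"
  have "norm (csol m q01 x y - f0 y - f1 y / of_real x) \<le> ?K * (1 + \<bar>y\<bar>^4) / x^2" if x: "x \<noteq> 0" for x y
  proof -
    have "norm (csol m q01 x y - f0 y - f1 y / of_real x) = norm ((hp r1 (of_real y) * (of_real x) + hp r0 (of_real y)) / of_real (Dm m x y)) / \<bar>x\<bar>"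
      unfolding key[OF x] by (simp add: norm_divide norm_mult)
    also have "\<dots> = norm ((hp r1 (of_real y) * (of_real x) + hp r0 (of_real y)) / of_real (Dm m y x)) / \<bar>x\<bar>"
      by (subst Dm_sym[of m y x]) (rule refl)
    also have "\<dots> \<le> ?K * (1 + \<bar>y\<bar>^4) / \<bar>x\<bar> / \<bar>x\<bar>"
      using errA[OF m x l1 l0, of y] by (intro divide_right_mono) auto
    also have "\<dots> = ?K * (1 + \<bar>y\<bar>^4) / x^2" by (simp add: power2_eq_square abs_mult_self_eq)
    finally show ?thesis .
  qed
  thus ?thesis using S0 S1' by blast
qed

lemma jbr2_sq: "jbr2 x y powr 2 = 1 + x^2 + y^2"
proof -
  have "0 \<le> jbr2 x y" using jbr2_pos[of x y] by simp
  hence "jbr2 x y powr 2 = jbr2 x y ^ 2" by simp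
  thus ?thesis unfolding jbr2_def by (simp add: add_nonneg_nonneg)
qed

lemma Dm_lb2: fixes x y :: real assumes m: "0 < m" shows "min (2*m) (3*m^2) * jbr2 x y powr 2 \<le> \<bar>Dm m x y\<bar>"
proof -
  have e: "\<bar>Dm m x y\<bar> = 2*m*(x^2+y^2) + 2*m*(x+y)^2 + 3*m^2"
    using Dm_pos[OF m, of x y] unfolding Dm_def by (simp add: power2_eq_square algebra_simps)
  have a: "0 \<le> 2*m*(x+y)^2" using m by auto
  have b: "min (2*m) (3*m^2) * (x^2+y^2) \<le> 2*m*(x^2+y^2)" by (intro mult_right_mono) auto
  have c: "min (2*m) (3*m^2) \<le> 3*m^2" by simp
  show ?thesis unfolding e jbr2_sq using a b c by (simp add: algebra_simps)
qed

lemma hh_gen: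
  assumes fF: "fam F" and F00: "F 0 0 = (\<lambda>x y. of_real (chi x y))"
    and pN: "ispoly eN" "real (pdeg eN) \<le> s + 3"
    and pR: "ispoly eR" "real (pdeg eR) \<le> s + 2"
    and NR: "\<forall>x. ev F eN x (-x) = ev F eR x (-x)"
    and hD: "HO F eD 2" "\<kappa> > 0" "\<forall>x y. \<kappa> * jbr2 x y powr 2 \<le> norm (ev F eD x y)"
    and f: "\<forall>x y. f x y = ev F eN x y / ev F eD x y"
  shows "\<exists>t h. S2 s t \<and> S2 s h \<and> (\<forall>x y. of_real (chi x y) * f x y = of_real (x + y) * t x y + h x y)"
proof -
  define F0 where "F0 = EAdd eN (EMul (EC (-1)) eR)"
  have p0: "ispoly F0" using pN pR unfolding F0_def by simp
  have d0: "real (pdeg F0) \<le> s + 3" using pN pR unfolding F0_def by simp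
  have H0: "HO F F0 (s + 3)" by (rule HO_poly[OF p0 d0])
  obtain Q R where Q: "HO F Q (s + 3 - 1)" and RR: "\<forall>x y. ev F F0 x y = of_real (x + y) * ev F Q x y + ev F R x y"
    and Rv: "\<forall>x y. ev F R x y = ev F F0 x (-x)" using div_lin[OF H0 p0] by blast
  have R0: "ev F R x y = 0" for x y using Rv NR unfolding F0_def by simp
  have dec: "ev F eN x y = of_real (x + y) * ev F Q x y + ev F eR x y" for x y
  proof -
    have "ev F F0 x y = of_real (x + y) * ev F Q x y" using RR R0 by simp
    thus ?thesis unfolding F0_def by (simp add: algebra_simps)
  qed
  have HQ: "HO F Q (s + 2)" using Q by (rule HO_mono) simp
  have HR: "HO F eR (s + 2)" by (rule HO_poly[OF pR])
  have HA: "HO F (EA 0 0) 0" by (rule HO.at) simp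
  have HI: "HO F (EInv eD) (-2)" by (rule HO.inv[OF hD(1) hD(2) hD(3)]) simp
  have Ht: "HO F (EMul (EA 0 0) (EMul Q (EInv eD))) s"
    by (rule HO.mul[OF HA HO.mul[OF HQ HI, where n=s]]) simp_all
  have Hh: "HO F (EMul (EA 0 0) (EMul eR (EInv eD))) s"
    by (rule HO.mul[OF HA HO.mul[OF HR HI, where n=s]]) simp_all
  show ?thesis
  proof (intro exI conjI allI)
    show "S2 s (ev F (EMul (EA 0 0) (EMul Q (EInv eD))))" by (rule HO_S2[OF fF Ht])
    show "S2 s (ev F (EMul (EA 0 0) (EMul eR (EInv eD))))" by (rule HO_S2[OF fF Hh])
    fix x y
    show "of_real (chi x y) * f x y = of_real (x + y) * ev F (EMul (EA 0 0) (EMul Q (EInv eD))) x y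
          + ev F (EMul (EA 0 0) (EMul eR (EInv eD))) x y"
      unfolding f[rule_format] dec by (simp add: F00 divide_inverse algebra_simps)
  qed
qed

definition "eX2 = EMul VX VX"
definition "eY2 = EMul VY VY"
definition "ep M = EAdd (EMul (EMul (EC 2) VX) VY) (EC (-M))"
definition "eP M = EMul (EAdd eX2 (EC M)) (EAdd eY2 (EC M))"
definition "eD M = EMul (EC (-1)) (EAdd (EMul (EC (4*M)) (EAdd (EAdd eX2 (EMul VX VY)) eY2)) (EC (3*M^2)))"
definition "eq00 al0 al1 = EAdd (EC al0) (EMul (EC al1) (EMul (EC \<i>) (EAdd VX VY)))"
definition "eq11 ga0 ga1 ga2 ga3 ga4 = EAdd (EAdd (EAdd (EAdd (EC ga0) (EMul (EC ga1) (EMul (EC \<i>) (EAdd VX VY))))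
   (EMul (EC ga2) (EMul VX VY))) (EMul (EC ga3) (EAdd eX2 eY2))) (EMul (EC ga4) (EMul (EC \<i>) (EAdd (EMul eX2 VY) (EMul VX eY2))))"
definition "eq01 be0 be1 be2 be3 be4 = EAdd (EAdd (EAdd (EAdd (EC be0) (EMul (EC (be1*\<i>)) VX)) (EMul (EC (be2*\<i>)) VY))
   (EMul (EC be3) (EMul VX VY))) (EMul (EC be4) eY2)"
definition "eq01s be0 be1 be2 be3 be4 = EAdd (EAdd (EAdd (EAdd (EC be0) (EMul (EC (be1*\<i>)) VY)) (EMul (EC (be2*\<i>)) VX))
   (EMul (EC be3) (EMul VY VX))) (EMul (EC be4) eX2)"

lemmas edefs = eX2_def eY2_def ep_def eP_def eD_def eq00_def eq11_def eq01_def eq01s_def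

lemma eD_ev: "ev F (eD (complex_of_real m)) x y = of_real (Dm m x y)"
  by (simp add: edefs Dm_def power2_eq_square algebra_simps)

lemma eD_HO: "HO F (eD M) 2" by (rule HO_poly) (simp_all add: edefs)

lemma eD_ell: assumes m: "0 < m"
  shows "\<forall>x y. min (2*m) (3*m^2) * jbr2 x y powr 2 \<le> norm (ev F (eD (complex_of_real m)) x y)"
  using Dm_lb2[OF m] by (simp add: eD_ev)

lemma hh_a:
  fixes al0 al1 ga0 ga1 ga2 ga3 ga4 :: complex
  assumes m: "0 < m"
    and q00: "\<forall>x y. q00 x y = al0 + al1 * (\<i> * of_real (x + y))"
    and q11: "\<forall>x y. q11 x y = ga0 + ga1 * (\<i> * of_real (x + y)) + ga2 * of_real (x * y) + ga3 * of_real (x^2 + y^2) + ga4 * (\<i> * of_real (x^2 * y + x * y^2))"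
    and fF: "fam F" and F00: "F 0 0 = (\<lambda>x y. of_real (chi x y))"
  shows "\<exists>t h. S2 2 t \<and> S2 2 h \<and> (\<forall>x y. of_real (chi x y) * asol m q00 q11 x y = of_real (x + y) * t x y + h x y)"
proof -
  define M where "M = complex_of_real m"
  define eN where "eN = EAdd (EMul (EMul (EC 2) (eP M)) (eq00 al0 al1)) (EMul (EC (-1)) (EMul (ep M) (eq11 ga0 ga1 ga2 ga3 ga4)))"
  define eR where "eR = EAdd (EMul (EMul (EC 2) (EMul (EAdd eX2 (EC M)) (EAdd eX2 (EC M)))) (EC al0))
     (EMul (EAdd (EMul (EC 2) eX2) (EC M)) (EAdd (EC ga0) (EMul (EC (2*ga3 - ga2)) eX2)))"
  have pN: "ispoly eN" "real (pdeg eN) \<le> 2 + 3" unfolding eN_def by (simp_all add: edefs)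
  have pR: "ispoly eR" "real (pdeg eR) \<le> 2 + 2" unfolding eR_def by (simp_all add: edefs)
  have NR: "\<forall>x. ev F eN x (-x) = ev F eR x (-x)"
    unfolding eN_def eR_def by (simp add: edefs algebra_simps power2_eq_square)
  have f: "\<forall>x y. asol m q00 q11 x y = ev F eN x y / ev F (eD M) x y"
  proof (intro allI)
    fix x y
    have qa: "q00 x y = al0 + al1 * (\<i> * (of_real x + of_real y))" using q00 by simp
    have qb: "q11 x y = ga0 + ga1 * (\<i> * (of_real x + of_real y)) + ga2 * (of_real x * of_real y) + ga3 * ((of_real x)^2 + (of_real y)^2) + ga4 * (\<i> * ((of_real x)^2 * of_real y + of_real x * (of_real y)^2))" using q11 by simp
    have "ev F eN x y = 2 * of_real ((x^2+m)*(y^2+m)) * q00 x y - of_real (2*x*y-m) * q11 x y"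
      unfolding qa qb eN_def M_def by (simp add: edefs algebra_simps power2_eq_square)
    thus "asol m q00 q11 x y = ev F eN x y / ev F (eD M) x y" unfolding asol_def M_def eD_ev by simp
  qed
  show ?thesis
    by (rule hh_gen[OF fF F00 pN pR NR eD_HO _ _ f, of "min (2*m) (3*m^2)"]) (use m eD_ell[OF m] in \<open>simp_all add: M_def\<close>)
qed

lemma hh_b:
  fixes al0 al1 ga0 ga1 ga2 ga3 ga4 :: complex
  assumes m: "0 < m"
    and q00: "\<forall>x y. q00 x y = al0 + al1 * (\<i> * of_real (x + y))"
    and q11: "\<forall>x y. q11 x y = ga0 + ga1 * (\<i> * of_real (x + y)) + ga2 * of_real (x * y) + ga3 * of_real (x^2 + y^2) + ga4 * (\<i> * of_real (x^2 * y + x * y^2))"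
    and fF: "fam F" and F00: "F 0 0 = (\<lambda>x y. of_real (chi x y))"
  shows "\<exists>t h. S2 0 t \<and> S2 0 h \<and> (\<forall>x y. of_real (chi x y) * bsol m q00 q11 x y = of_real (x + y) * t x y + h x y)"
proof -
  define M where "M = complex_of_real m"
  define eN where "eN = EAdd (EMul (EC 2) (eq11 ga0 ga1 ga2 ga3 ga4)) (EMul (EC (-1)) (EMul (ep M) (eq00 al0 al1)))"
  define eR where "eR = EAdd (EMul (EC 2) (EAdd (EC ga0) (EMul (EC (2*ga3 - ga2)) eX2))) (EMul (EAdd (EMul (EC 2) eX2) (EC M)) (EC al0))"
  have pN: "ispoly eN" "real (pdeg eN) \<le> 0 + 3" unfolding eN_def by (simp_all add: edefs)
  have pR: "ispoly eR" "real (pdeg eR) \<le> 0 + 2" unfolding eR_def by (simp_all add: edefs)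
  have NR: "\<forall>x. ev F eN x (-x) = ev F eR x (-x)"
    unfolding eN_def eR_def by (simp add: edefs algebra_simps power2_eq_square)
  have f: "\<forall>x y. bsol m q00 q11 x y = ev F eN x y / ev F (eD M) x y"
  proof (intro allI)
    fix x y
    have qa: "q00 x y = al0 + al1 * (\<i> * (of_real x + of_real y))" using q00 by simp
    have qb: "q11 x y = ga0 + ga1 * (\<i> * (of_real x + of_real y)) + ga2 * (of_real x * of_real y) + ga3 * ((of_real x)^2 + (of_real y)^2) + ga4 * (\<i> * ((of_real x)^2 * of_real y + of_real x * (of_real y)^2))" using q11 by simp
    have "ev F eN x y = 2 * q11 x y - of_real (2*x*y-m) * q00 x y"
      unfolding qa qb eN_def M_def by (simp add: edefs algebra_simps power2_eq_square)
    thus "bsol m q00 q11 x y = ev F eN x y / ev F (eD M) x y" unfolding bsol_def M_def eD_ev by simp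
  qed
  show ?thesis
    by (rule hh_gen[OF fF F00 pN pR NR eD_HO _ _ f, of "min (2*m) (3*m^2)"]) (use m eD_ell[OF m] in \<open>simp_all add: M_def\<close>)
qed

lemma hh_c:
  fixes be0 be1 be2 be3 be4 :: complex
  assumes m: "0 < m"
    and q01: "\<forall>x y. q01 x y = be0 + be1 * (\<i> * of_real x) + be2 * (\<i> * of_real y) + be3 * of_real (x * y) + be4 * of_real (y^2)"
    and fF: "fam F" and F00: "F 0 0 = (\<lambda>x y. of_real (chi x y))"
  shows "\<exists>t h. S2 1 t \<and> S2 1 h \<and> (\<forall>x y. of_real (chi x y) * csol m q01 x y = of_real (x + y) * t x y + h x y)"
proof -
  define M where "M = complex_of_real m"
  define eN where "eN = EAdd (EMul (EC (-1)) (EMul (ep M) (eq01 be0 be1 be2 be3 be4))) (EMul (EC (-2)) (EMul (EAdd eY2 (EC M)) (eq01s be0 be1 be2 be3 be4)))"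
  define eR where "eR = EAdd (EAdd (EAdd (EMul (EC (4*\<i>*(be1-be2))) (EMul eX2 VX)) (EMul (EC (-(M*(be4-be3)))) eX2)) (EMul (EC (3*M*\<i>*(be1-be2))) VX)) (EC (-(M*be0)))"
  have pN: "ispoly eN" "real (pdeg eN) \<le> 1 + 3" unfolding eN_def by (simp_all add: edefs)
  have pR: "ispoly eR" "real (pdeg eR) \<le> 1 + 2" unfolding eR_def by (simp_all add: edefs)
  have NR: "\<forall>x. ev F eN x (-x) = ev F eR x (-x)"
    unfolding eN_def eR_def by (simp add: edefs algebra_simps power2_eq_square)
  have f: "\<forall>x y. csol m q01 x y = ev F eN x y / ev F (eD M) x y"
  proof (intro allI)
    fix x y
    have qa: "q01 x y = be0 + be1 * (\<i> * of_real x) + be2 * (\<i> * of_real y) + be3 * (of_real x * of_real y) + be4 * (of_real y)^2" using q01 by simp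
    have qb: "q01 y x = be0 + be1 * (\<i> * of_real y) + be2 * (\<i> * of_real x) + be3 * (of_real y * of_real x) + be4 * (of_real x)^2" using q01 by simp
    have "ev F eN x y = - of_real (2*x*y-m) * q01 x y - 2 * of_real (y^2+m) * q01 y x"
      unfolding qa qb eN_def M_def by (simp add: edefs algebra_simps power2_eq_square)
    thus "csol m q01 x y = ev F eN x y / ev F (eD M) x y" unfolding csol_def M_def eD_ev by simp
  qed
  show ?thesis
    by (rule hh_gen[OF fF F00 pN pR NR eD_HO _ _ f, of "min (2*m) (3*m^2)"]) (use m eD_ell[OF m] in \<open>simp_all add: M_def\<close>)
qed

theorem proposition3p1:
  fixes m :: real and q00 q01 q11 :: symb and chi :: "real \<Rightarrow> real \<Rightarrow> real"
  assumes m_pos: "0 < m"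
    and q00_span: "\<exists>\<alpha>0 \<alpha>1 :: complex. \<forall>x y.
           q00 x y = \<alpha>0 + \<alpha>1 * (\<i> * of_real (x + y))"
    and q01_span: "\<exists>\<beta>0 \<beta>1 \<beta>2 \<beta>3 \<beta>4 :: complex. \<forall>x y.
           q01 x y = \<beta>0 + \<beta>1 * (\<i> * of_real x) + \<beta>2 * (\<i> * of_real y)
                     + \<beta>3 * of_real (x * y) + \<beta>4 * of_real (y^2)"
    and q11_span: "\<exists>\<gamma>0 \<gamma>1 \<gamma>2 \<gamma>3 \<gamma>4 :: complex. \<forall>x y.
           q11 x y = \<gamma>0 + \<gamma>1 * (\<i> * of_real (x + y)) + \<gamma>2 * of_real (x * y)
                     + \<gamma>3 * of_real (x^2 + y^2) + \<gamma>4 * (\<i> * of_real (x^2 * y + x * y^2))"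
    and q00_sym: "sym_symb q00" and q11_sym: "sym_symb q11"
    and q_real: "real_symb q00" "real_symb q01" "real_symb q11"
    and chi_hh: "is_chi_hh chi"
  shows "\<exists>a b c. is_normal_form m q00 q01 q11 a b c
     \<and> (\<forall>a' b' c'. is_normal_form m q00 q01 q11 a' b' c' \<longrightarrow> a' = a \<and> b' = b \<and> c' = c)
     \<and> (\<exists>c0 > 0.
          (\<exists>a0 a1 K. S1 2 a0 \<and> S1 3 a1 \<and>
             (\<forall>x y. \<bar>x\<bar> \<le> c0 * \<bar>y\<bar> \<and> y \<noteq> 0 \<longrightarrow>
                norm (a x y - a0 x * of_real y - a1 x) \<le> K * (1 + \<bar>x\<bar>^4) / \<bar>y\<bar>))
        \<and> (\<exists>b0 b1 K. S1 1 b0 \<and> S1 2 b1 \<and>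
             (\<forall>x y. \<bar>x\<bar> \<le> c0 * \<bar>y\<bar> \<and> y \<noteq> 0 \<longrightarrow>
                norm (b x y - b0 x - b1 x / of_real y) \<le> K * (1 + \<bar>x\<bar>^3) / y^2))
        \<and> (\<exists>c10 c11 K. S1 1 c10 \<and> S1 2 c11 \<and>
             (\<forall>x y. \<bar>x\<bar> \<le> c0 * \<bar>y\<bar> \<and> y \<noteq> 0 \<longrightarrow>
                norm (c x y - c10 x * of_real y - c11 x) \<le> K * (1 + \<bar>x\<bar>^3) / \<bar>y\<bar>))
        \<and> (\<exists>c20 c21 K. S1 2 c20 \<and> S1 3 c21 \<and>
             (\<forall>x y. \<bar>y\<bar> \<le> c0 * \<bar>x\<bar> \<and> x \<noteq> 0 \<longrightarrow>
                norm (c x y - c20 y - c21 y / of_real x) \<le> K * (1 + \<bar>y\<bar>^4) / x^2)))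
     \<and> (\<exists>at' ahh0 :: symb. S2 2 at' \<and> S2 2 ahh0 \<and>
          (\<forall>x y. of_real (chi x y) * a x y = of_real (x + y) * at' x y + ahh0 x y))
     \<and> (\<exists>bt' bhh0 :: symb. S2 0 bt' \<and> S2 0 bhh0 \<and>
          (\<forall>x y. of_real (chi x y) * b x y = of_real (x + y) * bt' x y + bhh0 x y))
     \<and> (\<exists>ct' chh0 :: symb. S2 1 ct' \<and> S2 1 chh0 \<and>
          (\<forall>x y. of_real (chi x y) * c x y = of_real (x + y) * ct' x y + chh0 x y))"
proof -
  obtain al0 al1 :: complex where q00: "\<forall>x y. q00 x y = al0 + al1 * (\<i> * of_real (x + y))"
    using q00_span by blast
  obtain be0 be1 be2 be3 be4 :: complex where q01: "\<forall>x y. q01 x y = be0 + be1 * (\<i> * of_real x) + be2 * (\<i> * of_real y)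
                     + be3 * of_real (x * y) + be4 * of_real (y^2)"
    using q01_span by blast
  obtain ga0 ga1 ga2 ga3 ga4 :: complex where q11: "\<forall>x y. q11 x y = ga0 + ga1 * (\<i> * of_real (x + y)) + ga2 * of_real (x * y)
                     + ga3 * of_real (x^2 + y^2) + ga4 * (\<i> * of_real (x^2 * y + x * y^2))"
    using q11_span by blast
  have S2chi: "S2 0 (\<lambda>x y. complex_of_real (chi x y))" using chi_hh unfolding is_chi_hh_def by blast
  then obtain F where F00: "F 0 0 = (\<lambda>x y. complex_of_real (chi x y))" and fF: "fam F"
    unfolding S2_def fam_def by blast
  define a where "a = asol m q00 q11"
  define b where "b = bsol m q00 q11"
  define c where "c = csol m q01"
  have nf: "is_normal_form m q00 q01 q11 a b c"
    unfolding a_def b_def c_def by (rule exist_nf[OF m_pos q00_sym q11_sym q_real])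
  have un: "\<forall>a' b' c'. is_normal_form m q00 q01 q11 a' b' c' \<longrightarrow> a' = a \<and> b' = b \<and> c' = c"
    unfolding a_def b_def c_def using uniq_nf[OF m_pos q00_sym q11_sym] by blast
  obtain a0 a1 Ka where A: "S1 2 a0" "S1 3 a1"
    "\<forall>x y. y \<noteq> 0 \<longrightarrow> norm (a x y - a0 x * of_real y - a1 x) \<le> Ka * (1 + \<bar>x\<bar>^4) / \<bar>y\<bar>"
    using exp_a[OF m_pos q00 q11] unfolding a_def by blast
  obtain b0 b1 Kb where B: "S1 1 b0" "S1 2 b1"
    "\<forall>x y. y \<noteq> 0 \<longrightarrow> norm (b x y - b0 x - b1 x / of_real y) \<le> Kb * (1 + \<bar>x\<bar>^3) / y^2"
    using exp_b[OF m_pos q00 q11] unfolding b_def by blast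
  obtain c10 c11 Kc where C1: "S1 1 c10" "S1 2 c11"
    "\<forall>x y. y \<noteq> 0 \<longrightarrow> norm (c x y - c10 x * of_real y - c11 x) \<le> Kc * (1 + \<bar>x\<bar>^3) / \<bar>y\<bar>"
    using exp_c1[OF m_pos q01] unfolding c_def by blast
  obtain c20 c21 Kd where C2: "S1 2 c20" "S1 3 c21"
    "\<forall>x y. x \<noteq> 0 \<longrightarrow> norm (c x y - c20 y - c21 y / of_real x) \<le> Kd * (1 + \<bar>y\<bar>^4) / x^2"
    using exp_c2[OF m_pos q01] unfolding c_def by blast
  have low: "\<exists>c0 > 0.
          (\<exists>a0 a1 K. S1 2 a0 \<and> S1 3 a1 \<and>
             (\<forall>x y. \<bar>x\<bar> \<le> c0 * \<bar>y\<bar> \<and> y \<noteq> 0 \<longrightarrow>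
                norm (a x y - a0 x * of_real y - a1 x) \<le> K * (1 + \<bar>x\<bar>^4) / \<bar>y\<bar>))
        \<and> (\<exists>b0 b1 K. S1 1 b0 \<and> S1 2 b1 \<and>
             (\<forall>x y. \<bar>x\<bar> \<le> c0 * \<bar>y\<bar> \<and> y \<noteq> 0 \<longrightarrow>
                norm (b x y - b0 x - b1 x / of_real y) \<le> K * (1 + \<bar>x\<bar>^3) / y^2))
        \<and> (\<exists>c10 c11 K. S1 1 c10 \<and> S1 2 c11 \<and>
             (\<forall>x y. \<bar>x\<bar> \<le> c0 * \<bar>y\<bar> \<and> y \<noteq> 0 \<longrightarrow>
                norm (c x y - c10 x * of_real y - c11 x) \<le> K * (1 + \<bar>x\<bar>^3) / \<bar>y\<bar>))
        \<and> (\<exists>c20 c21 K. S1 2 c20 \<and> S1 3 c21 \<and>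
             (\<forall>x y. \<bar>y\<bar> \<le> c0 * \<bar>x\<bar> \<and> x \<noteq> 0 \<longrightarrow>
                norm (c x y - c20 y - c21 y / of_real x) \<le> K * (1 + \<bar>y\<bar>^4) / x^2))"
  proof (rule exI[of _ "1::real"], intro conjI)
    show "(0::real) < 1" by simp
    show "\<exists>a0 a1 K. S1 2 a0 \<and> S1 3 a1 \<and>
             (\<forall>x y. \<bar>x\<bar> \<le> 1 * \<bar>y\<bar> \<and> y \<noteq> 0 \<longrightarrow>
                norm (a x y - a0 x * of_real y - a1 x) \<le> K * (1 + \<bar>x\<bar>^4) / \<bar>y\<bar>)"
      by (rule exI[of _ a0], rule exI[of _ a1], rule exI[of _ Ka]) (use A in blast)
    show "\<exists>b0 b1 K. S1 1 b0 \<and> S1 2 b1 \<and>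
             (\<forall>x y. \<bar>x\<bar> \<le> 1 * \<bar>y\<bar> \<and> y \<noteq> 0 \<longrightarrow>
                norm (b x y - b0 x - b1 x / of_real y) \<le> K * (1 + \<bar>x\<bar>^3) / y^2)"
      by (rule exI[of _ b0], rule exI[of _ b1], rule exI[of _ Kb]) (use B in blast)
    show "\<exists>c10 c11 K. S1 1 c10 \<and> S1 2 c11 \<and>
             (\<forall>x y. \<bar>x\<bar> \<le> 1 * \<bar>y\<bar> \<and> y \<noteq> 0 \<longrightarrow>
                norm (c x y - c10 x * of_real y - c11 x) \<le> K * (1 + \<bar>x\<bar>^3) / \<bar>y\<bar>)"
      by (rule exI[of _ c10], rule exI[of _ c11], rule exI[of _ Kc]) (use C1 in blast)
    show "\<exists>c20 c21 K. S1 2 c20 \<and> S1 3 c21 \<and>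
             (\<forall>x y. \<bar>y\<bar> \<le> 1 * \<bar>x\<bar> \<and> x \<noteq> 0 \<longrightarrow>
                norm (c x y - c20 y - c21 y / of_real x) \<le> K * (1 + \<bar>y\<bar>^4) / x^2)"
      by (rule exI[of _ c20], rule exI[of _ c21], rule exI[of _ Kd]) (use C2 in blast)
  qed
  obtain at' ahh0 where HA: "S2 2 at'" "S2 2 ahh0"
    "\<forall>x y. of_real (chi x y) * a x y = of_real (x + y) * at' x y + ahh0 x y"
    using hh_a[OF m_pos q00 q11 fF F00] unfolding a_def by blast
  obtain bt' bhh0 where HB: "S2 0 bt'" "S2 0 bhh0"
    "\<forall>x y. of_real (chi x y) * b x y = of_real (x + y) * bt' x y + bhh0 x y"
    using hh_b[OF m_pos q00 q11 fF F00] unfolding b_def by blast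
  obtain ct' chh0 where HC: "S2 1 ct'" "S2 1 chh0"
    "\<forall>x y. of_real (chi x y) * c x y = of_real (x + y) * ct' x y + chh0 x y"
    using hh_c[OF m_pos q01 fF F00] unfolding c_def by blast
  show ?thesis
  proof (rule exI[of _ a], rule exI[of _ b], rule exI[of _ c], intro conjI nf un low)
    show "\<exists>at' ahh0 :: symb. S2 2 at' \<and> S2 2 ahh0 \<and>
          (\<forall>x y. of_real (chi x y) * a x y = of_real (x + y) * at' x y + ahh0 x y)"
      by (rule exI[of _ at'], rule exI[of _ ahh0]) (use HA in blast)
    show "\<exists>bt' bhh0 :: symb. S2 0 bt' \<and> S2 0 bhh0 \<and>
          (\<forall>x y. of_real (chi x y) * b x y = of_real (x + y) * bt' x y + bhh0 x y)"
      by (rule exI[of _ bt'], rule exI[of _ bhh0]) (use HB in blast)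
    show "\<exists>ct' chh0 :: symb. S2 1 ct' \<and> S2 1 chh0 \<and>
          (\<forall>x y. of_real (chi x y) * c x y = of_real (x + y) * ct' x y + chh0 x y)"
      by (rule exI[of _ ct'], rule exI[of _ chh0]) (use HC in blast)
  qed
qed

end
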